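(* Let $(X,d,G)$ be a $G$-system. Then for every tempered two-sided Følner sequence $\{F_n\}$ of $G$, $$\overline{\mathrm{mdim}}_M(G,X,d)=\max_{x\in X}\overline{\mathrm{mdim}}_M(x,\{F_n\},d)=\max_{\mu\in M(X,G)}\int\overline{\mathrm{mdim}}_M(x,\{F_n\},d)\,d\mu(x).$$
   Context: $G$ is a countably infinite discrete amenable group; a $G$-system $(X,d,G)$ is a compact metric space with a continuous $G$-action by homeomorphisms. A Følner sequence $\{F_n\}$: nonempty finite sets with $|gF_n\triangle F_n|/|F_n|\to0$ for all $g$; two-sided if also $|F_ng\triangle F_n|/|F_n|\to0$ for all $g$; tempered if $|\bigcup_{j<n}F_j^{-1}F_n|\le C|F_n|$ for some $C>0$ and all $n$. $d_F(x,y)=\max_{g\in F}d(gx,gy)$. For nonempty $Z\subset X$, $s(Z,d_F,\epsilon)$ is the maximal cardinality of a subset of $Z$ whose distinct points have $d_F$-distance $>\epsilon$; $h_{top}(G,Z,d,\{F_n\},\epsilon)=\limsup_n\frac1{|F_n|}\log s(Z,d_{F_n},\epsilon)$; $\overline{\mathrm{mdim}}_M(G,Z,\{F_n\},d)=\limsup_{\epsilon\to0}h_{top}(G,Z,d,\{F_n\},\epsilon)/\log\frac1\epsilon$, and $\overline{\mathrm{mdim}}_M(G,X,d)$ denotes this for $Z=X$. The local upper metric mean dimension of $x\in X$ is $\overline{\mathrm{mdim}}_M(x,\{F_n\},d)=\inf_K\overline{\mathrm{mdim}}_M(G,K,\{F_n\},d)$, the infimum over all closed neighborhoods $K$ of $x$.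 $M(X,G)$ is the set of $G$-invariant Borel probability measures. *)

theory Defs
  imports "HOL-Analysis.Analysis" "HOL-Probability.Probability"
begin

text \<open>The countable discrete group G is a type of class group_add (written additively,
  not assumed commutative). Group action T on a compact set X of a metric space
  (the metric d is dist).\<close>

definition left_transl :: "'g::group_add \<Rightarrow> 'g set \<Rightarrow> 'g set" where
  "left_transl g F = (\<lambda>h. g + h) ` F"

definition right_transl :: "'g set \<Rightarrow> 'g::group_add \<Rightarrow> 'g set" where
  "right_transl F g = (\<lambda>h. h + g) ` F"

definition symdiff :: "'a set \<Rightarrow> 'a set \<Rightarrow> 'a set" where
  "symdiff A B = (A - B) \<union> (B - A)"

definition folner_seq :: "(nat \<Rightarrow> 'g::group_add set) \<Rightarrow> bool" where
  "folner_seq F \<longleftrightarrow> (\<forall>n. finite (F n) \<and> F n \<noteq> {}) \<and>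
     (\<forall>g. (\<lambda>n. real (card (symdiff (left_transl g (F n)) (F n))) / real (card (F n)))
            \<longlonglongrightarrow> 0)"

definition two_sided_folner_seq :: "(nat \<Rightarrow> 'g::group_add set) \<Rightarrow> bool" where
  "two_sided_folner_seq F \<longleftrightarrow> folner_seq F \<and>
     (\<forall>g. (\<lambda>n. real (card (symdiff (right_transl (F n) g) (F n))) / real (card (F n)))
            \<longlonglongrightarrow> 0)"

text \<open>F_j^{-1} F_n = {a^{-1} b | a \<in> F_j, b \<in> F_n}.\<close>
definition tempered :: "(nat \<Rightarrow> 'g::group_add set) \<Rightarrow> bool" where
  "tempered F \<longleftrightarrow> (\<exists>C>0. \<forall>n.
     real (card (\<Union>j<n. {- a + b | a b. a \<in> F j \<and> b \<in> F n})) \<le> C * real (card (F n)))"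

definition amenable_group :: "'g::group_add itself \<Rightarrow> bool" where
  "amenable_group _ \<longleftrightarrow> (\<exists>F :: nat \<Rightarrow> 'g set. folner_seq F)"

definition G_system :: "'a::metric_space set \<Rightarrow> ('g::group_add \<Rightarrow> 'a \<Rightarrow> 'a) \<Rightarrow> bool" where
  "G_system X T \<longleftrightarrow> compact X \<and>
     (\<forall>g. T g ` X \<subseteq> X \<and> continuous_on X (T g)) \<and>
     (\<forall>x\<in>X. T 0 x = x) \<and>
     (\<forall>g h. \<forall>x\<in>X. T (g + h) x = T g (T h x))"

definition bowen_dist :: "('g \<Rightarrow> 'a \<Rightarrow> 'a::metric_space) \<Rightarrow> 'g set \<Rightarrow> 'a \<Rightarrow> 'a \<Rightarrow> real" where
  "bowen_dist T F x y = Max ((\<lambda>g. dist (T g x) (T g y)) ` F)"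

definition sep_num :: "('g \<Rightarrow> 'a \<Rightarrow> 'a::metric_space) \<Rightarrow> 'a set \<Rightarrow> 'g set \<Rightarrow> real \<Rightarrow> nat" where
  "sep_num T Z F eps = Sup {card E | E. E \<subseteq> Z \<and> finite E \<and>
      (\<forall>x\<in>E. \<forall>y\<in>E. x \<noteq> y \<longrightarrow> bowen_dist T F x y > eps)}"

definition htop_eps :: "('g \<Rightarrow> 'a \<Rightarrow> 'a::metric_space) \<Rightarrow> 'a set \<Rightarrow> (nat \<Rightarrow> 'g set) \<Rightarrow> real \<Rightarrow> ereal" where
  "htop_eps T Z F eps =
     limsup (\<lambda>n. ereal (ln (real (sep_num T Z (F n) eps)) / real (card (F n))))"

text \<open>Upper metric mean dimension of Z (log base cancels in the ratio; we use ln).\<close>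
definition umdim_M :: "('g \<Rightarrow> 'a \<Rightarrow> 'a::metric_space) \<Rightarrow> 'a set \<Rightarrow> (nat \<Rightarrow> 'g set) \<Rightarrow> ereal" where
  "umdim_M T Z F = Limsup (at_right 0) (\<lambda>eps. htop_eps T Z F eps / ereal (ln (1 / eps)))"

definition local_umdim_M :: "'a::metric_space set \<Rightarrow> ('g \<Rightarrow> 'a \<Rightarrow> 'a) \<Rightarrow> (nat \<Rightarrow> 'g set) \<Rightarrow> 'a \<Rightarrow> ereal" where
  "local_umdim_M X T F x = (INF K \<in> {K. K \<subseteq> X \<and> closed K \<and>
       (\<exists>U. open U \<and> x \<in> U \<and> U \<inter> X \<subseteq> K)}. umdim_M T K F)"

definition invariant_measures :: "'a::metric_space set \<Rightarrow> ('g \<Rightarrow> 'a \<Rightarrow> 'a) \<Rightarrow> 'a measure set" where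
  "invariant_measures X T = {\<mu>. prob_space \<mu> \<and> sets \<mu> = sets (restrict_space borel X) \<and>
     (\<forall>g. T g \<in> measurable \<mu> \<mu> \<and>
          (\<forall>A\<in>sets \<mu>. emeasure \<mu> (T g -` A \<inter> space \<mu>) = emeasure \<mu> A))}"

end

theory Submission
  imports Defs
begin

definition sepset :: "('g \<Rightarrow> 'a \<Rightarrow> 'a::metric_space) \<Rightarrow> 'a set \<Rightarrow> 'g set \<Rightarrow> real \<Rightarrow> 'a set \<Rightarrow> bool" where
  "sepset T Z F eps E \<longleftrightarrow> E \<subseteq> Z \<and> finite E \<and> (\<forall>x\<in>E. \<forall>y\<in>E. x \<noteq> y \<longrightarrow> bowen_dist T F x y > eps)"

lemma sep_num_alt: "sep_num T Z F eps = Sup {card E | E. sepset T Z F eps E}"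
  unfolding sep_num_def sepset_def by simp

lemma net_exists:
  assumes "compact X" "r > 0"
  shows "\<exists>k. finite k \<and> k \<subseteq> X \<and> (\<forall>y\<in>X. \<exists>c\<in>k. dist y c < r)"
proof -
  obtain k where k: "finite k" "k \<subseteq> X" "X \<subseteq> (\<Union>x\<in>k. ball x r)"
    using seq_compact_imp_totally_bounded[OF compact_imp_seq_compact[OF assms(1)]] assms(2) by meson
  have "\<forall>y\<in>X. \<exists>c\<in>k. dist y c < r"
  proof
    fix y assume "y \<in> X"
    then obtain c where "c \<in> k" "y \<in> ball c r" using k(3) by blast
    thus "\<exists>c\<in>k. dist y c < r" by (auto simp: dist_commute)
  qed
  thus ?thesis using k by blast
qed

definition cc :: "'a::metric_space set \<Rightarrow> real \<Rightarrow> 'a \<Rightarrow> 'a" where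
  "cc k r y = (SOME c. c \<in> k \<and> dist y c < r)"

lemma cc:
  assumes "\<forall>y\<in>X. \<exists>c\<in>k. dist y c < r" "y \<in> X"
  shows "cc k r y \<in> k \<and> dist y (cc k r y) < r"
  unfolding cc_def by (rule someI_ex) (use assms in blast)

lemma cc_close:
  assumes "\<forall>y\<in>X. \<exists>c\<in>k. dist y c < r" "y \<in> X" "z \<in> X" "cc k r y = cc k r z"
  shows "dist y z < 2 * r"
  using cc[OF assms(1,2)] cc[OF assms(1,3)] assms(4)
  by (smt (verit) dist_commute dist_triangle)

lemma bowen_ge:
  assumes "finite F" "g \<in> F"
  shows "dist (T g x) (T g y) \<le> bowen_dist T F x y"
  unfolding bowen_dist_def using assms by (intro Max_ge) auto

lemma bowen_less:
  assumes "finite F" "F \<noteq> {}" "\<And>g. g \<in> F \<Longrightarrow> dist (T g x) (T g y) < e"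
  shows "bowen_dist T F x y < e"
  unfolding bowen_dist_def using assms by (subst Max_less_iff) auto

lemma bowen_le:
  assumes "finite F" "F \<noteq> {}" "\<And>g. g \<in> F \<Longrightarrow> dist (T g x) (T g y) \<le> e"
  shows "bowen_dist T F x y \<le> e"
  unfolding bowen_dist_def using assms by (subst Max_le_iff) auto

lemma bowen_self: "finite F \<Longrightarrow> F \<noteq> {} \<Longrightarrow> bowen_dist T F x x = 0"
  unfolding bowen_dist_def by (simp add: image_constant_conv)

lemma sepset_bdd:
  assumes "compact X" "eps > 0" "Z \<subseteq> X" "finite F" "F \<noteq> {}" "\<forall>g. T g ` X \<subseteq> X"
  shows "\<exists>N. \<forall>E. sepset T Z F eps E \<longrightarrow> card E \<le> N"
proof -
  obtain k where k: "finite k" "k \<subseteq> X" "\<forall>y\<in>X. \<exists>c\<in>k. dist y c < eps/2"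
    using net_exists[OF assms(1), of "eps/2"] assms(2) by auto
  define code where "code x = restrict (\<lambda>g. cc k (eps/2) (T g x)) F" for x
  show ?thesis
  proof (intro exI[of _ "card (PiE F (\<lambda>_. k))"] allI impI)
    fix E assume E: "sepset T Z F eps E"
    have TX: "T g x \<in> X" if "x \<in> E" for g x using that E assms(3,6) unfolding sepset_def by blast
    have sub: "code ` E \<subseteq> PiE F (\<lambda>_. k)" unfolding code_def using cc[OF k(3)] TX by auto
    have inj: "inj_on code E"
    proof (rule inj_onI)
      fix x y assume xy: "x \<in> E" "y \<in> E" "code x = code y"
      show "x = y"
      proof (rule ccontr)
        assume "x \<noteq> y"
        hence "bowen_dist T F x y > eps" using E xy unfolding sepset_def by auto
        moreover have "bowen_dist T F x y < eps"
        proof (rule bowen_less[OF assms(4,5)])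
          fix g assume g: "g \<in> F"
          have "cc k (eps/2) (T g x) = cc k (eps/2) (T g y)"
          proof -
            have "code x g = code y g" using xy(3) by simp
            thus ?thesis using g unfolding code_def by simp
          qed
          from cc_close[OF k(3) TX[OF xy(1)] TX[OF xy(2)] this] show "dist (T g x) (T g y) < eps" by simp
        qed
        ultimately show False by simp
      qed
    qed
    show "card E \<le> card (PiE F (\<lambda>_. k))"
      by (rule card_inj_on_le[OF inj sub finite_PiE[OF assms(4)]]) (use k(1) in simp)
  qed
qed

lemma sep_num_props:
  assumes "compact X" "eps > 0" "Z \<subseteq> X" "finite F" "F \<noteq> {}" "\<forall>g. T g ` X \<subseteq> X"
  shows "\<And>E. sepset T Z F eps E \<Longrightarrow> card E \<le> sep_num T Z F eps"
    and "\<exists>E. sepset T Z F eps E \<and> card E = sep_num T Z F eps"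
proof -
  define S where "S = {card E | E. sepset T Z F eps E}"
  obtain N where N: "\<forall>E. sepset T Z F eps E \<longrightarrow> card E \<le> N" using sepset_bdd[OF assms] by blast
  have ne: "S \<noteq> {}" unfolding S_def using sepset_def by fastforce
  have fin: "finite S" unfolding S_def using N
    by (intro finite_nat_set_iff_bounded_le[THEN iffD2]) blast
  have bdd: "bdd_above S" using fin by (rule bdd_above_finite)
  show "card E \<le> sep_num T Z F eps" if "sepset T Z F eps E" for E
    unfolding sep_num_alt S_def[symmetric] by (rule cSup_upper) (use that bdd S_def in auto)
  have "Sup S \<in> S" using fin ne by (simp add: cSup_eq_Max)
  thus "\<exists>E. sepset T Z F eps E \<and> card E = sep_num T Z F eps"
    unfolding sep_num_alt S_def[symmetric] unfolding S_def by auto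
qed

lemma sep_num_ge1:
  assumes "compact X" "eps > 0" "Z \<subseteq> X" "finite F" "F \<noteq> {}" "\<forall>g. T g ` X \<subseteq> X" "z \<in> Z"
  shows "sep_num T Z F eps \<ge> 1"
proof -
  have "sepset T Z F eps {z}" unfolding sepset_def using assms by auto
  from sep_num_props(1)[OF assms(1-6) this] show ?thesis by simp
qed

lemma sep_num_mono:
  assumes "compact X" "eps > 0" "Z' \<subseteq> X" "finite F" "F \<noteq> {}" "\<forall>g. T g ` X \<subseteq> X" "Z \<subseteq> Z'"
  shows "sep_num T Z F eps \<le> sep_num T Z' F eps"
proof -
  obtain E where E: "sepset T Z F eps E" "card E = sep_num T Z F eps"
    using sep_num_props(2)[OF assms(1,2) _ assms(4-6), of Z] assms(3,7) by auto
  have "sepset T Z' F eps E" using E(1) assms(7) unfolding sepset_def by auto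
  from sep_num_props(1)[OF assms(1-6) this] E(2) show ?thesis by simp
qed

lemma sep_num_union:
  assumes "compact X" "eps > 0" "Z1 \<subseteq> X" "Z2 \<subseteq> X" "finite F" "F \<noteq> {}" "\<forall>g. T g ` X \<subseteq> X"
  shows "sep_num T (Z1 \<union> Z2) F eps \<le> sep_num T Z1 F eps + sep_num T Z2 F eps"
proof -
  obtain E where E: "sepset T (Z1 \<union> Z2) F eps E" "card E = sep_num T (Z1 \<union> Z2) F eps"
    using sep_num_props(2)[OF assms(1,2) _ assms(5-7), of "Z1 \<union> Z2"] assms(3,4) by auto
  have "sepset T Z1 F eps (E \<inter> Z1)" "sepset T Z2 F eps (E - Z1)" using E(1) unfolding sepset_def by auto
  hence "card (E \<inter> Z1) \<le> sep_num T Z1 F eps" "card (E - Z1) \<le> sep_num T Z2 F eps"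
    using sep_num_props(1)[OF assms(1,2) _ assms(5-7)] assms(3,4) by auto
  moreover have "card E = card (E \<inter> Z1) + card (E - Z1)"
    using E(1) unfolding sepset_def by (metis card_Int_Diff)
  ultimately show ?thesis using E(2) by linarith
qed


lemma ln_union_bound:
  fixes s s1 s2 :: nat and c :: real
  assumes "s1 \<ge> 1" "s2 \<ge> 1" "s \<le> s1 + s2" "s \<ge> 1" "c \<ge> 1"
  shows "ln s / c \<le> ln 2 + max (ln s1 / c) (ln s2 / c)"
proof -
  have l2: "ln (2::real) \<ge> 0" by simp
  have c0: "c > 0" using assms by simp
  show ?thesis
  proof (cases "s1 \<le> s2")
    case True
    hence "real s \<le> 2 * real s2" using assms by linarith
    hence "ln s \<le> ln (2 * real s2)" using assms by (subst ln_le_cancel_iff) auto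
    also have "\<dots> = ln 2 + ln s2" using assms by (simp add: ln_mult)
    finally have "ln s / c \<le> (ln 2 + ln s2) / c" using c0 by (simp add: divide_right_mono)
    also have "\<dots> = ln 2 / c + ln s2 / c" by (simp add: add_divide_distrib)
    also have "\<dots> \<le> ln 2 + ln s2 / c" using l2 assms(5) by (simp add: divide_le_eq)
    finally show ?thesis by simp
  next
    case False
    hence "real s \<le> 2 * real s1" using assms by linarith
    hence "ln s \<le> ln (2 * real s1)" using assms by (subst ln_le_cancel_iff) auto
    also have "\<dots> = ln 2 + ln s1" using assms by (simp add: ln_mult)
    finally have "ln s / c \<le> (ln 2 + ln s1) / c" using c0 by (simp add: divide_right_mono)
    also have "\<dots> = ln 2 / c + ln s1 / c" by (simp add: add_divide_distrib)
    also have "\<dots> \<le> ln 2 + ln s1 / c" using l2 assms(5) by (simp add: divide_le_eq)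
    finally show ?thesis by simp
  qed
qed

lemma Limsup_le_by_reals:
  fixes f :: "_ \<Rightarrow> ereal"
  assumes "\<And>r. c < ereal r \<Longrightarrow> eventually (\<lambda>x. f x < ereal r) F"
  shows "Limsup F f \<le> c"
proof (rule Limsup_le_iff[THEN iffD2], intro allI impI)
  fix y assume "y > c"
  then obtain r where r: "c < ereal r" "ereal r < y" using ereal_dense2 by blast
  from assms[OF r(1)] show "eventually (\<lambda>x. f x < y) F"
    by eventually_elim (use r(2) in auto)
qed

lemma ev_ln_large: "eventually (\<lambda>e. c < ln (1/e)) (at_right (0::real))"
proof (subst eventually_at_right_field, intro exI[of _ "exp (-c)"] conjI allI impI)
  show "exp (-c) > 0" by simp
  fix y :: real assume y: "y > 0" "y < exp (-c)"
  hence "ln y < -c" using ln_less_cancel_iff[of y "exp (-c)"] by simp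
  thus "c < ln (1/y)" using y by (simp add: ln_div)
qed

lemma ev_pos_small: "eventually (\<lambda>e. 0 < e \<and> e < (1::real)) (at_right 0)"
  by (subst eventually_at_right_field) (auto intro!: exI[of _ 1])

lemma htop_union:
  assumes "compact X" "eps > 0" "Z1 \<subseteq> X" "Z2 \<subseteq> X" "Z1 \<noteq> {}" "Z2 \<noteq> {}"
    "\<And>n. finite (F n)" "\<And>n. F n \<noteq> {}" "\<forall>g. T g ` X \<subseteq> X"
  shows "htop_eps T (Z1 \<union> Z2) F eps \<le> ereal (ln 2) + max (htop_eps T Z1 F eps) (htop_eps T Z2 F eps)"
  unfolding htop_eps_def
proof (rule Limsup_le_by_reals)
  fix r assume r: "ereal (ln 2) + max (limsup (\<lambda>n. ereal (ln (real (sep_num T Z1 (F n) eps)) / real (card (F n)))))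
                (limsup (\<lambda>n. ereal (ln (real (sep_num T Z2 (F n) eps)) / real (card (F n))))) < ereal r"
  (is "_ + max ?h1 ?h2 < _")
  have "max ?h1 ?h2 < ereal (r - ln 2)" using r by (cases "max ?h1 ?h2") auto
  hence "?h1 < ereal (r - ln 2)" "?h2 < ereal (r - ln 2)" by auto
  from Limsup_lessD[OF this(1)] Limsup_lessD[OF this(2)]
  show "eventually (\<lambda>n. ereal (ln (real (sep_num T (Z1 \<union> Z2) (F n) eps)) / real (card (F n))) < ereal r) sequentially"
  proof eventually_elim
    case (elim n)
    obtain z1 z2 where z: "z1 \<in> Z1" "z2 \<in> Z2" using assms(5,6) by blast
    have c1: "real (card (F n)) \<ge> 1" using assms(7,8)[of n] by (simp add: Suc_leI card_gt_0_iff)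
    have s1: "sep_num T Z1 (F n) eps \<ge> 1" by (rule sep_num_ge1[OF assms(1,2,3,7,8,9) z(1)])
    have s2: "sep_num T Z2 (F n) eps \<ge> 1" by (rule sep_num_ge1[OF assms(1,2,4,7,8,9) z(2)])
    have s: "sep_num T (Z1 \<union> Z2) (F n) eps \<ge> 1" by (rule sep_num_ge1[OF assms(1,2) _ assms(7,8,9), of _ z1]) (use assms(3,4) z in auto)
    have su: "sep_num T (Z1 \<union> Z2) (F n) eps \<le> sep_num T Z1 (F n) eps + sep_num T Z2 (F n) eps"
      by (rule sep_num_union[OF assms(1-4,7,8,9)])
    from ln_union_bound[OF s1 s2 su s c1] elim show ?case by auto
  qed
qed

lemma ereal_div_less_real:
  assumes "L > 0"
  shows "x / ereal L < ereal r \<longleftrightarrow> x < ereal (r * L)"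
  using ereal_divide_less_iff[of "ereal L" x "ereal r"] assms by simp

lemma umdim_union:
  assumes "compact X" "Z1 \<subseteq> X" "Z2 \<subseteq> X" "Z1 \<noteq> {}" "Z2 \<noteq> {}"
    "\<And>n. finite (F n)" "\<And>n. F n \<noteq> {}" "\<forall>g. T g ` X \<subseteq> X"
  shows "umdim_M T (Z1 \<union> Z2) F \<le> max (umdim_M T Z1 F) (umdim_M T Z2 F)"
  unfolding umdim_M_def
proof (rule Limsup_le_by_reals)
  fix r assume r: "max (Limsup (at_right 0) (\<lambda>eps. htop_eps T Z1 F eps / ereal (ln (1 / eps))))
          (Limsup (at_right 0) (\<lambda>eps. htop_eps T Z2 F eps / ereal (ln (1 / eps)))) < ereal r"
    (is "max ?m1 ?m2 < _")
  obtain r1 where r1: "max ?m1 ?m2 < ereal r1" "ereal r1 < ereal r" using ereal_dense2[OF r] by blast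
  hence rr: "r - r1 > 0" by simp
  have "?m1 < ereal r1" "?m2 < ereal r1" using r1 by auto
  note ev = Limsup_lessD[OF this(1)] Limsup_lessD[OF this(2)] ev_pos_small ev_ln_large[of "ln 2 / (r - r1)"]
  show "eventually (\<lambda>e. htop_eps T (Z1 \<union> Z2) F e / ereal (ln (1 / e)) < ereal r) (at_right 0)"
    using ev
  proof eventually_elim
    case (elim e)
    define L where "L = ln (1/e)"
    have L: "L > 0" using elim(3) unfolding L_def by simp
    have h1: "htop_eps T Z1 F e < ereal (r1 * L)" using elim(1) ereal_div_less_real[OF L] L_def by simp
    have h2: "htop_eps T Z2 F e < ereal (r1 * L)" using elim(2) ereal_div_less_real[OF L] L_def by simp
    have hu: "htop_eps T (Z1 \<union> Z2) F e \<le> ereal (ln 2) + max (htop_eps T Z1 F e) (htop_eps T Z2 F e)"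
      by (rule htop_union[OF assms(1)]) (use elim(3) assms in auto)
    have "max (htop_eps T Z1 F e) (htop_eps T Z2 F e) < ereal (r1 * L)" using h1 h2 by simp
    hence A: "ereal (ln 2) + max (htop_eps T Z1 F e) (htop_eps T Z2 F e) < ereal (ln 2 + r1 * L)"
      by (cases "max (htop_eps T Z1 F e) (htop_eps T Z2 F e)") auto
    have B: "ln 2 + r1 * L < r * L"
    proof -
      have "ln 2 / (r - r1) < L" using elim(4) L_def by simp
      hence "ln 2 < (r - r1) * L" using rr by (simp add: divide_less_eq mult.commute)
      thus ?thesis by (simp add: algebra_simps)
    qed
    have "htop_eps T (Z1 \<union> Z2) F e < ereal (r * L)"
    proof -
      note hu
      also note A
      also have "ereal (ln 2 + r1 * L) < ereal (r * L)" using B by simp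
      finally show ?thesis .
    qed
    thus ?case using ereal_div_less_real[OF L] L_def by simp
  qed
qed


lemma htop_mono:
  assumes "compact X" "eps > 0" "Z' \<subseteq> X" "Z \<subseteq> Z'" "Z \<noteq> {}"
    "\<And>n. finite (F n)" "\<And>n. F n \<noteq> {}" "\<forall>g. T g ` X \<subseteq> X"
  shows "htop_eps T Z F eps \<le> htop_eps T Z' F eps"
  unfolding htop_eps_def
proof (rule Limsup_mono, rule always_eventually, rule allI)
  fix n
  obtain z where z: "z \<in> Z" using assms(5) by blast
  have s1: "sep_num T Z (F n) eps \<ge> 1" by (rule sep_num_ge1[OF assms(1,2) _ assms(6,7,8) z]) (use assms(3,4) in auto)
  have "sep_num T Z (F n) eps \<le> sep_num T Z' (F n) eps" by (rule sep_num_mono[OF assms(1,2,3,6,7,8,4)])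
  hence "ln (real (sep_num T Z (F n) eps)) \<le> ln (real (sep_num T Z' (F n) eps))" using s1 by simp
  thus "ereal (ln (real (sep_num T Z (F n) eps)) / real (card (F n))) \<le> ereal (ln (real (sep_num T Z' (F n) eps)) / real (card (F n)))"
    by (simp add: divide_right_mono)
qed

lemma umdim_mono:
  assumes "compact X" "Z' \<subseteq> X" "Z \<subseteq> Z'" "Z \<noteq> {}"
    "\<And>n. finite (F n)" "\<And>n. F n \<noteq> {}" "\<forall>g. T g ` X \<subseteq> X"
  shows "umdim_M T Z F \<le> umdim_M T Z' F"
  unfolding umdim_M_def
proof (rule Limsup_mono)
  show "eventually (\<lambda>e. htop_eps T Z F e / ereal (ln (1 / e)) \<le> htop_eps T Z' F e / ereal (ln (1 / e))) (at_right 0)"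
    using ev_pos_small
  proof eventually_elim
    case (elim e)
    have "htop_eps T Z F e \<le> htop_eps T Z' F e" by (rule htop_mono[OF assms(1) _ assms(2-7)]) (use elim in auto)
    moreover have "ereal (ln (1/e)) > 0" using elim by simp
    ultimately show ?case by simp
  qed
qed

lemma umdim_Union_less:
  assumes "finite S" "S \<noteq> {}" "compact X" "\<And>K. K \<in> S \<Longrightarrow> K \<subseteq> X \<and> K \<noteq> {} \<and> umdim_M T K F < c"
    "\<And>n. finite (F n)" "\<And>n. F n \<noteq> {}" "\<forall>g. T g ` X \<subseteq> X"
  shows "umdim_M T (\<Union>S) F < c"
  using assms(1,2,4)
proof (induction S rule: finite_ne_induct)
  case (singleton K)
  then show ?case by simp
next
  case (insert K S)
  have K: "K \<subseteq> X" "K \<noteq> {}" "umdim_M T K F < c" using insert.prems by auto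
  have IH: "umdim_M T (\<Union>S) F < c" using insert.IH insert.prems by auto
  have S: "\<Union>S \<subseteq> X" "\<Union>S \<noteq> {}" using insert.prems insert.hyps(2) by auto
  have "umdim_M T (K \<union> \<Union>S) F \<le> max (umdim_M T K F) (umdim_M T (\<Union>S) F)"
    by (rule umdim_union[OF assms(3) K(1) S(1) K(2) S(2) assms(5-7)])
  also have "\<dots> < c" using K(3) IH by simp
  finally show ?case by simp
qed

lemma G_sys_maps: "G_system X T \<Longrightarrow> \<forall>g. T g ` X \<subseteq> X"
  unfolding G_system_def by blast

lemma local_le:
  assumes "compact X"
  shows "local_umdim_M X T F x \<le> umdim_M T X F"
  unfolding local_umdim_M_def
  by (rule INF_lower) (use assms compact_imp_closed in auto)

lemma exists_full_point:
  assumes "compact X" "X \<noteq> {}" "\<And>n. finite (F n)" "\<And>n. F n \<noteq> {}" "\<forall>g. T g ` X \<subseteq> X"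
  shows "\<exists>x0\<in>X. local_umdim_M X T F x0 = umdim_M T X F"
proof (rule ccontr)
  define M where "M = umdim_M T X F"
  define Nb where "Nb x = {K. K \<subseteq> X \<and> closed K \<and> (\<exists>U. open U \<and> x \<in> U \<and> U \<inter> X \<subseteq> K)}" for x
  assume "\<not> (\<exists>x0\<in>X. local_umdim_M X T F x0 = umdim_M T X F)"
  hence lt: "local_umdim_M X T F x < M" if "x \<in> X" for x
    using local_le[OF assms(1), of T F x] that unfolding M_def by (simp add: order.order_iff_strict)
  have "\<exists>K U. K \<in> Nb x \<and> umdim_M T K F < M \<and> open U \<and> x \<in> U \<and> U \<inter> X \<subseteq> K" if "x \<in> X" for x
  proof -
    have "(INF K \<in> Nb x. umdim_M T K F) < M" using lt[OF that] unfolding local_umdim_M_def Nb_def by simp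
    then obtain K where K: "K \<in> Nb x" "umdim_M T K F < M" by (auto simp: INF_less_iff)
    then obtain U where "open U" "x \<in> U" "U \<inter> X \<subseteq> K" unfolding Nb_def by auto
    thus ?thesis using K by blast
  qed
  then obtain K U where KU: "\<And>x. x \<in> X \<Longrightarrow> K x \<in> Nb x \<and> umdim_M T (K x) F < M \<and> open (U x) \<and> x \<in> U x \<and> U x \<inter> X \<subseteq> K x"
    by metis
  have "X \<subseteq> (\<Union>x\<in>X. U x)" using KU by blast
  then obtain D where D: "D \<subseteq> X" "finite D" "X \<subseteq> (\<Union>x\<in>D. U x)"
    using compactE_image[OF assms(1), of X U] KU by blast
  have XD: "X = \<Union>(K ` D)"
  proof
    show "X \<subseteq> \<Union>(K ` D)" using D KU by blast
    show "\<Union>(K ` D) \<subseteq> X" using D KU unfolding Nb_def by blast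
  qed
  have "D \<noteq> {}" using D(3) assms(2) by auto
  have "umdim_M T (\<Union>(K ` D)) F < M"
  proof (rule umdim_Union_less[OF _ _ assms(1) _ assms(3-5)])
    show "finite (K ` D)" "K ` D \<noteq> {}" using D \<open>D \<noteq> {}\<close> by auto
    fix K' assume "K' \<in> K ` D"
    then obtain x where x: "x \<in> D" "K' = K x" by blast
    have "x \<in> X" using x D by auto
    thus "K' \<subseteq> X \<and> K' \<noteq> {} \<and> umdim_M T K' F < M" using KU[of x] x unfolding Nb_def by auto
  qed
  thus False using XD M_def by simp
qed

lemma Gs:
  assumes "G_system X T"
  shows "compact X" "\<And>g x. x \<in> X \<Longrightarrow> T g x \<in> X" "\<And>g. continuous_on X (T g)"
    "\<And>x. x \<in> X \<Longrightarrow> T 0 x = x" "\<And>g h x. x \<in> X \<Longrightarrow> T (g + h) x = T g (T h x)"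
    "\<forall>g. T g ` X \<subseteq> X"
  using assms unfolding G_system_def by blast+

lemma Gs_inv:
  assumes "G_system X T" "x \<in> X"
  shows "T (-g) (T g x) = x" "T g (T (-g) x) = x"
proof -
  have "T (-g + g) x = T (-g) (T g x)" by (rule Gs(5)[OF assms(1) assms(2)])
  thus "T (-g) (T g x) = x" using Gs(4)[OF assms] by simp
  have "T (g + -g) x = T g (T (-g) x)" by (rule Gs(5)[OF assms(1) assms(2)])
  thus "T g (T (-g) x) = x" using Gs(4)[OF assms] by simp
qed

lemma bowen_transl:
  assumes "G_system X T" "a \<in> X" "b \<in> X"
  shows "bowen_dist T F (T g a) (T g b) = bowen_dist T (right_transl F g) a b"
proof -
  have "(\<lambda>h. dist (T h (T g a)) (T h (T g b))) ` F = (\<lambda>k. dist (T k a) (T k b)) ` ((\<lambda>h. h + g) ` F)"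
    using Gs(5)[OF assms(1)] assms(2,3) by (auto simp: image_image)
  thus ?thesis unfolding bowen_dist_def right_transl_def by simp
qed

lemma right_transl_fin:
  "finite F \<Longrightarrow> finite (right_transl F g)" "F \<noteq> {} \<Longrightarrow> right_transl F g \<noteq> {}"
  "card (right_transl F g) = card F"
  unfolding right_transl_def by (auto intro!: card_image inj_onI)

lemma bowen_sym: "bowen_dist T F x y = bowen_dist T F y x"
  unfolding bowen_dist_def by (simp add: dist_commute)

lemma bowen_triangle:
  assumes "finite F" "F \<noteq> {}"
  shows "bowen_dist T F x z \<le> bowen_dist T F x y + bowen_dist T F y z"
proof (rule bowen_le[OF assms])
  fix g assume g: "g \<in> F"
  have "dist (T g x) (T g z) \<le> dist (T g x) (T g y) + dist (T g y) (T g z)" by (rule dist_triangle)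
  also have "\<dots> \<le> bowen_dist T F x y + bowen_dist T F y z"
    using bowen_ge[OF assms(1) g] by (intro add_mono) auto
  finally show "dist (T g x) (T g z) \<le> bowen_dist T F x y + bowen_dist T F y z" .
qed

lemma sep_num_image:
  assumes "G_system X T" "eps > 0" "K \<subseteq> X" "finite F" "F \<noteq> {}"
  shows "sep_num T (T g ` K) F eps \<le> sep_num T K (right_transl F g) eps"
proof -
  note G = Gs[OF assms(1)]
  have TK: "T g ` K \<subseteq> X" using G(2) assms(3) by auto
  obtain E where E: "sepset T (T g ` K) F eps E" "card E = sep_num T (T g ` K) F eps"
    using sep_num_props(2)[OF G(1) assms(2) TK assms(4,5) G(6)] by blast
  define E' where "E' = T (-g) ` E"
  have EX: "E \<subseteq> X" using E(1) TK unfolding sepset_def by auto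
  have inj: "inj_on (T (-g)) E"
    by (rule inj_on_inverseI[of _ "T g"]) (use Gs_inv[OF assms(1)] EX in auto)
  have bk: "T g ` E' = E"
  proof -
    have "T g ` E' = (\<lambda>x. T g (T (-g) x)) ` E" unfolding E'_def by (simp add: image_image)
    also have "\<dots> = (\<lambda>x. x) ` E" by (rule image_cong) (use Gs_inv(2)[OF assms(1)] EX in auto)
    finally show ?thesis by simp
  qed
  have E'K: "E' \<subseteq> K"
  proof
    fix a assume "a \<in> E'"
    then obtain y where y: "y \<in> E" "a = T (-g) y" unfolding E'_def by blast
    then obtain k where k: "k \<in> K" "y = T g k" using E(1) unfolding sepset_def by blast
    thus "a \<in> K" using y Gs_inv(1)[OF assms(1)] assms(3) by auto
  qed
  have "sepset T K (right_transl F g) eps E'"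
    unfolding sepset_def
  proof (intro conjI ballI impI)
    show "E' \<subseteq> K" by (rule E'K)
    show "finite E'" using E(1) unfolding sepset_def E'_def by auto
    fix a b assume ab: "a \<in> E'" "b \<in> E'" "a \<noteq> b"
    have "T g a \<in> E" "T g b \<in> E" using bk ab by auto
    moreover have "T g a \<noteq> T g b"
    proof
      assume "T g a = T g b"
      hence "T (-g) (T g a) = T (-g) (T g b)" by simp
      moreover have "a \<in> X" "b \<in> X" using ab E'K assms(3) by auto
      ultimately show False using Gs_inv(1)[OF assms(1)] ab(3) by simp
    qed
    ultimately have "bowen_dist T F (T g a) (T g b) > eps" using E(1) unfolding sepset_def by blast
    moreover have "a \<in> X" "b \<in> X" using ab E'K assms(3) by auto
    ultimately show "bowen_dist T (right_transl F g) a b > eps"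
      using bowen_transl[OF assms(1), of a b F g] by simp
  qed
  hence "card E' \<le> sep_num T K (right_transl F g) eps"
    by (rule sep_num_props(1)[OF G(1) assms(2,3) right_transl_fin(1)[OF assms(4)] right_transl_fin(2)[OF assms(5)] G(6)])
  moreover have "card E' = card E" unfolding E'_def by (rule card_image[OF inj])
  ultimately show ?thesis using E(2) by simp
qed


lemma sep_num_shift:
  assumes "compact X" "eps > 0" "K \<subseteq> X" "finite F" "F \<noteq> {}" "finite F'" "F' \<noteq> {}" "\<forall>g. T g ` X \<subseteq> X"
    and k: "finite k" "\<forall>y\<in>X. \<exists>c\<in>k. dist y c < eps/2"
  shows "sep_num T K F' eps \<le> sep_num T K F (eps/2) * card k ^ card (F' - F)"
proof -
  have e2: "eps/2 > 0" using assms(2) by simp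
  obtain E where E: "sepset T K F' eps E" "card E = sep_num T K F' eps"
    using sep_num_props(2)[OF assms(1,2,3,6,7,8)] by blast
  obtain E0 where E0: "sepset T K F (eps/2) E0" "card E0 = sep_num T K F (eps/2)"
    using sep_num_props(2)[OF assms(1) e2 assms(3,4,5,8)] by blast
  have near: "\<exists>e\<in>E0. bowen_dist T F a e \<le> eps/2" if a: "a \<in> K" for a
  proof (rule ccontr)
    assume nex: "\<not> (\<exists>e\<in>E0. bowen_dist T F a e \<le> eps/2)"
    have aE: "a \<notin> E0"
    proof
      assume "a \<in> E0"
      moreover have "bowen_dist T F a a \<le> eps/2" using bowen_self[OF assms(4,5), of T a] assms(2) by simp
      ultimately show False using nex by blast
    qed
    have "sepset T K F (eps/2) (insert a E0)"
      unfolding sepset_def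
    proof (intro conjI ballI impI)
      show "insert a E0 \<subseteq> K" using a E0(1) unfolding sepset_def by auto
      show "finite (insert a E0)" using E0(1) unfolding sepset_def by auto
      fix x y assume xy: "x \<in> insert a E0" "y \<in> insert a E0" "x \<noteq> y"
      show "bowen_dist T F x y > eps/2"
      proof (cases "x = a")
        case True
        then show ?thesis using xy nex by auto
      next
        case False
        show ?thesis
        proof (cases "y = a")
          case True
          then show ?thesis using xy nex False bowen_sym[of T F x a] by auto
        next
          case False
          then show ?thesis using xy \<open>x \<noteq> a\<close> E0(1) unfolding sepset_def by auto
        qed
      qed
    qed
    hence "card (insert a E0) \<le> sep_num T K F (eps/2)"
      by (rule sep_num_props(1)[OF assms(1) e2 assms(3,4,5,8)])
    moreover have "card (insert a E0) = card E0 + 1" using aE E0(1) unfolding sepset_def by auto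
    ultimately show False using E0(2) by simp
  qed
  define nr where "nr a = (SOME e. e \<in> E0 \<and> bowen_dist T F a e \<le> eps/2)" for a
  have nr: "nr a \<in> E0 \<and> bowen_dist T F a (nr a) \<le> eps/2" if "a \<in> K" for a
    unfolding nr_def by (rule someI_ex) (use near[OF that] in blast)
  define code where "code a = (nr a, restrict (\<lambda>h. cc k (eps/2) (T h a)) (F' - F))" for a
  have EK: "E \<subseteq> K" and finE: "finite E" using E(1) unfolding sepset_def by auto
  have TX: "T h a \<in> X" if "a \<in> E" for h a using that EK assms(3,8) by blast
  have sub: "code ` E \<subseteq> E0 \<times> PiE (F' - F) (\<lambda>_. k)"
  proof
    fix y assume "y \<in> code ` E"
    then obtain a where a: "a \<in> E" "y = code a" by blast
    have "restrict (\<lambda>h. cc k (eps/2) (T h a)) (F' - F) \<in> PiE (F' - F) (\<lambda>_. k)"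
      unfolding restrict_PiE_iff using cc[OF k(2) TX[OF a(1)]] by blast
    moreover have "nr a \<in> E0" using nr a EK by blast
    ultimately show "y \<in> E0 \<times> PiE (F' - F) (\<lambda>_. k)" using a unfolding code_def by simp
  qed
  have inj: "inj_on code E"
  proof (rule inj_onI)
    fix a b assume ab: "a \<in> E" "b \<in> E" "code a = code b"
    show "a = b"
    proof (rule ccontr)
      assume "a \<noteq> b"
      hence gt: "bowen_dist T F' a b > eps" using E(1) ab unfolding sepset_def by auto
      have "bowen_dist T F' a b \<le> eps"
      proof (rule bowen_le[OF assms(6,7)])
        fix h assume h: "h \<in> F'"
        show "dist (T h a) (T h b) \<le> eps"
        proof (cases "h \<in> F")
          case True
          have nrab: "nr a = nr b" using ab(3) unfolding code_def by simp
          have "dist (T h a) (T h b) \<le> bowen_dist T F a b" by (rule bowen_ge[OF assms(4) True])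
          also have "\<dots> \<le> bowen_dist T F a (nr a) + bowen_dist T F (nr a) b" by (rule bowen_triangle[OF assms(4,5)])
          also have "\<dots> \<le> eps/2 + eps/2"
            using nr[of a] nr[of b] ab EK nrab bowen_sym[of T F "nr b" b] by (intro add_mono) auto
          finally show ?thesis by simp
        next
          case False
          have "code a = code b" by (rule ab(3))
          hence "restrict (\<lambda>h. cc k (eps/2) (T h a)) (F' - F) h = restrict (\<lambda>h. cc k (eps/2) (T h b)) (F' - F) h"
            unfolding code_def by simp
          hence "cc k (eps/2) (T h a) = cc k (eps/2) (T h b)" using h False by simp
          from cc_close[OF k(2) TX[OF ab(1)] TX[OF ab(2)] this] show ?thesis by simp
        qed
      qed
      thus False using gt by simp
    qed
  qed
  have "card E \<le> card (E0 \<times> PiE (F' - F) (\<lambda>_. k))"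
    by (rule card_inj_on_le[OF inj sub]) (use E0(1) k(1) assms(6) in \<open>auto simp: sepset_def intro!: finite_PiE\<close>)
  also have "\<dots> = card E0 * card k ^ card (F' - F)"
    using card_PiE[of "F' - F" "\<lambda>_. k"] assms(6) by (simp add: card_cartesian_product)
  finally show ?thesis using E(2) E0(2) by simp
qed


lemma arith_shift:
  fixes s' s0 N d :: nat and c D \<delta> r1 :: real
  assumes "s' \<le> s0 * N ^ d" "s' \<ge> 1" "s0 \<ge> 1" "N \<ge> 1" "c \<ge> 1" "real d \<le> D"
    "D / c < \<delta> / (ln N + 1)" "\<delta> > 0" "ln s0 / c < r1"
  shows "ln s' / c < r1 + \<delta>"
proof -
  have lnN: "ln (real N) \<ge> 0" using assms(4) by simp
  have c0: "c > 0" using assms(5) by simp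
  have "real s' \<le> real s0 * real N ^ d" using assms(1) by (metis of_nat_le_iff of_nat_mult of_nat_power)
  hence "ln (real s') \<le> ln (real s0 * real N ^ d)" using assms(2-4) by (subst ln_le_cancel_iff) auto
  also have "\<dots> = ln s0 + d * ln N" using assms(3,4) by (simp add: ln_mult ln_realpow)
  finally have "ln s' \<le> ln s0 + d * ln N" .
  hence "ln s' / c \<le> (ln s0 + d * ln N) / c" using c0 by (simp add: divide_right_mono)
  hence 1: "ln s' / c \<le> ln s0 / c + (d / c) * ln N" by (simp add: add_divide_distrib)
  have "(d / c) * ln N \<le> (D / c) * ln N" using assms(6) c0 lnN by (intro mult_right_mono divide_right_mono) auto
  also have "\<dots> \<le> \<delta> / (ln N + 1) * ln N" using assms(7) lnN by (intro mult_right_mono) auto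
  also have "\<dots> < \<delta>"
  proof -
    have "\<delta> / (ln N + 1) * ln N = \<delta> * (ln N / (ln N + 1))" by simp
    also have "\<dots> < \<delta> * 1" using lnN assms(8) by (intro mult_strict_left_mono) auto
    finally show ?thesis by simp
  qed
  finally show ?thesis using 1 assms(9) by linarith
qed

lemma htop_shift:
  assumes "G_system X T" "eps > 0" "K \<subseteq> X" "K \<noteq> {}" "\<And>n. finite (F n)" "\<And>n. F n \<noteq> {}"
    "(\<lambda>n. real (card (symdiff (right_transl (F n) g) (F n))) / real (card (F n))) \<longlonglongrightarrow> 0"
  shows "htop_eps T (T g ` K) F eps \<le> htop_eps T K F (eps/2)"
  unfolding htop_eps_def
proof (rule Limsup_le_by_reals)
  note G = Gs[OF assms(1)]
  fix r assume r: "limsup (\<lambda>n. ereal (ln (real (sep_num T K (F n) (eps / 2))) / real (card (F n)))) < ereal r"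
  obtain r1 where r1: "limsup (\<lambda>n. ereal (ln (real (sep_num T K (F n) (eps / 2))) / real (card (F n)))) < ereal r1"
    "ereal r1 < ereal r" using ereal_dense2[OF r] by blast
  have e2: "eps/2 > 0" using assms(2) by simp
  obtain k where k: "finite k" "k \<subseteq> X" "\<forall>y\<in>X. \<exists>c\<in>k. dist y c < eps/2"
    using net_exists[OF G(1) e2] by blast
  obtain x where x: "x \<in> K" using assms(4) by blast
  have "k \<noteq> {}" using k(3) x assms(3) by blast
  hence N1: "card k \<ge> 1" using k(1) by (simp add: Suc_leI card_gt_0_iff)
  define \<delta> where "\<delta> = r - r1"
  have \<delta>: "\<delta> > 0" using r1 \<delta>_def by simp
  have "ln (real (card k)) \<ge> 0" using N1 by simp
  hence pos: "\<delta> / (ln (card k) + 1) > 0" using \<delta> by (intro divide_pos_pos) auto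
  note ev = Limsup_lessD[OF r1(1)] order_tendstoD(2)[OF assms(7) pos]
  show "eventually (\<lambda>n. ereal (ln (real (sep_num T (T g ` K) (F n) eps)) / real (card (F n))) < ereal r) sequentially"
    using ev
  proof eventually_elim
    case (elim n)
    let ?F' = "right_transl (F n) g"
    have c1: "real (card (F n)) \<ge> 1" using assms(5,6)[of n] by (simp add: Suc_leI card_gt_0_iff)
    have TK: "T g ` K \<subseteq> X" using assms(3) G(2) by auto
    obtain z where z: "z \<in> T g ` K" using x by blast
    have s'1: "sep_num T (T g ` K) (F n) eps \<ge> 1"
      by (rule sep_num_ge1[OF G(1) assms(2) TK assms(5,6) G(6) z])
    have s01: "sep_num T K (F n) (eps/2) \<ge> 1"
      by (rule sep_num_ge1[OF G(1) e2 assms(3) assms(5,6) G(6) x])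
    have "sep_num T (T g ` K) (F n) eps \<le> sep_num T K ?F' eps"
      by (rule sep_num_image[OF assms(1,2,3,5,6)])
    also have "\<dots> \<le> sep_num T K (F n) (eps/2) * card k ^ card (?F' - F n)"
      by (rule sep_num_shift[OF G(1) assms(2,3,5,6) right_transl_fin(1)[OF assms(5)] right_transl_fin(2)[OF assms(6)] G(6) k(1,3)])
    finally have A: "sep_num T (T g ` K) (F n) eps \<le> sep_num T K (F n) (eps/2) * card k ^ card (?F' - F n)" .
    have "card (?F' - F n) \<le> card (symdiff ?F' (F n))"
      by (rule card_mono) (use right_transl_fin(1)[OF assms(5)] assms(5) in \<open>auto simp: symdiff_def\<close>)
    hence D: "real (card (?F' - F n)) \<le> real (card (symdiff ?F' (F n)))" by simp
    have "ln (sep_num T (T g ` K) (F n) eps) / card (F n) < r1 + \<delta>"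
      by (rule arith_shift[OF A s'1 s01 N1 c1 D]) (use elim \<delta> in auto)
    thus ?case using \<delta>_def by simp
  qed
qed

lemma ev_half:
  assumes "eventually P (at_right (0::real))"
  shows "eventually (\<lambda>e. P (e/2)) (at_right 0)"
proof -
  obtain b where b: "b > 0" "\<And>y. y > 0 \<Longrightarrow> y < b \<Longrightarrow> P y" using assms unfolding eventually_at_right_field by auto
  show ?thesis unfolding eventually_at_right_field
    by (rule exI[of _ b]) (use b in auto)
qed

lemma umdim_image:
  assumes "G_system X T" "K \<subseteq> X" "K \<noteq> {}" "\<And>n. finite (F n)" "\<And>n. F n \<noteq> {}"
    "(\<lambda>n. real (card (symdiff (right_transl (F n) g) (F n))) / real (card (F n))) \<longlonglongrightarrow> 0"
  shows "umdim_M T (T g ` K) F \<le> umdim_M T K F"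
proof -
  have "umdim_M T (T g ` K) F \<le> Limsup (at_right 0) (\<lambda>e. htop_eps T K F (e/2) / ereal (ln (1/e)))"
    unfolding umdim_M_def
  proof (rule Limsup_mono)
    show "eventually (\<lambda>e. htop_eps T (T g ` K) F e / ereal (ln (1 / e)) \<le> htop_eps T K F (e/2) / ereal (ln (1/e))) (at_right 0)"
      using ev_pos_small
    proof eventually_elim
      case (elim e)
      have "htop_eps T (T g ` K) F e \<le> htop_eps T K F (e/2)" by (rule htop_shift[OF assms(1) _ assms(2-6)]) (use elim in auto)
      moreover have "ereal (ln (1/e)) > 0" using elim by simp
      ultimately show ?case by simp
    qed
  qed
  also have "\<dots> \<le> umdim_M T K F"
    unfolding umdim_M_def
  proof (rule Limsup_le_by_reals)
    fix r assume r: "Limsup (at_right 0) (\<lambda>e. htop_eps T K F e / ereal (ln (1 / e))) < ereal r"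
    obtain r1 where r1: "Limsup (at_right 0) (\<lambda>e. htop_eps T K F e / ereal (ln (1 / e))) < ereal r1" "ereal r1 < ereal r"
      using ereal_dense2[OF r] by blast
    have rr: "r - r1 > 0" using r1 by simp
    note ev = ev_half[OF Limsup_lessD[OF r1(1)]] ev_pos_small ev_ln_large[of "\<bar>r1\<bar> * ln 2 / (r - r1)"]
    show "eventually (\<lambda>e. htop_eps T K F (e/2) / ereal (ln (1/e)) < ereal r) (at_right 0)"
      using ev
    proof eventually_elim
      case (elim e)
      define L where "L = ln (1/e)"
      have L: "L > 0" using elim(2) L_def by simp
      have L2: "ln (1 / (e/2)) = ln 2 + L" using elim(2) L_def by (simp add: ln_div)
      have L2p: "ln 2 + L > 0" using L by (simp add: add_pos_pos)
      have H1: "htop_eps T K F (e/2) < ereal (r1 * (ln 2 + L))"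
        using elim(1) ereal_div_less_real[OF L2p] L2 by simp
      have H2: "r1 * (ln 2 + L) < r * L"
      proof -
        have "\<bar>r1\<bar> * ln 2 / (r - r1) < L" using elim(3) L_def by simp
        hence "\<bar>r1\<bar> * ln 2 < (r - r1) * L" using rr by (simp add: divide_less_eq mult.commute)
        moreover have "r1 * ln 2 \<le> \<bar>r1\<bar> * ln 2" by (intro mult_right_mono) auto
        moreover have "r1 * (ln 2 + L) = r1 * ln 2 + r1 * L" "(r - r1) * L = r * L - r1 * L" by (simp_all add: algebra_simps)
        ultimately show ?thesis by linarith
      qed
      have "ereal (r1 * (ln 2 + L)) < ereal (r * L)" using H2 by simp
      with H1 have "htop_eps T K F (e/2) < ereal (r * L)" by (rule less_trans)
      thus ?case using ereal_div_less_real[OF L] L_def by simp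
    qed
  qed
  finally show ?thesis .
qed


lemma nb_image:
  assumes "G_system X T" "x \<in> X" "K \<subseteq> X" "closed K" "open U" "x \<in> U" "U \<inter> X \<subseteq> K"
  shows "T g ` K \<subseteq> X \<and> closed (T g ` K) \<and> (\<exists>V. open V \<and> T g x \<in> V \<and> V \<inter> X \<subseteq> T g ` K)"
proof (intro conjI)
  note G = Gs[OF assms(1)]
  show "T g ` K \<subseteq> X" using G(2) assms(3) by auto
  have "compact (X \<inter> K)" by (rule compact_Int_closed[OF G(1) assms(4)])
  hence cK: "compact K" using assms(3) by (simp add: Int_absorb1)
  have "compact (T g ` K)" by (rule compact_continuous_image[OF continuous_on_subset[OF G(3) assms(3)] cK])
  thus "closed (T g ` K)" by (rule compact_imp_closed)
  obtain A where A: "open A" "A \<inter> X = T (-g) -` U \<inter> X"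
    using G(3)[of "-g", unfolded continuous_on_open_invariant] assms(5) by blast
  show "\<exists>V. open V \<and> T g x \<in> V \<and> V \<inter> X \<subseteq> T g ` K"
  proof (intro exI[of _ A] conjI)
    show "open A" by (rule A(1))
    have "T g x \<in> X" using G(2) assms(2) by auto
    moreover have "T (-g) (T g x) \<in> U" using Gs_inv(1)[OF assms(1,2)] assms(6) by simp
    ultimately show "T g x \<in> A" using A(2) by blast
    show "A \<inter> X \<subseteq> T g ` K"
    proof
      fix y assume y: "y \<in> A \<inter> X"
      hence "T (-g) y \<in> U" "T (-g) y \<in> X" using A(2) G(2) by auto
      hence "T (-g) y \<in> K" using assms(7) by blast
      moreover have "y = T g (T (-g) y)" using Gs_inv(2)[OF assms(1)] y by simp
      ultimately show "y \<in> T g ` K" by blast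
    qed
  qed
qed

lemma local_image_le:
  assumes "G_system X T" "x \<in> X" "\<And>n. finite (F n)" "\<And>n. F n \<noteq> {}"
    "(\<lambda>n. real (card (symdiff (right_transl (F n) g) (F n))) / real (card (F n))) \<longlonglongrightarrow> 0"
  shows "local_umdim_M X T F (T g x) \<le> local_umdim_M X T F x"
  unfolding local_umdim_M_def
proof (rule INF_greatest)
  fix K assume "K \<in> {K. K \<subseteq> X \<and> closed K \<and> (\<exists>U. open U \<and> x \<in> U \<and> U \<inter> X \<subseteq> K)}"
  then obtain U where K: "K \<subseteq> X" "closed K" "open U" "x \<in> U" "U \<inter> X \<subseteq> K" by blast
  have Kne: "K \<noteq> {}" using K assms(2) by blast
  have "T g ` K \<in> {K. K \<subseteq> X \<and> closed K \<and> (\<exists>U. open U \<and> T g x \<in> U \<and> U \<inter> X \<subseteq> K)}"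
    using nb_image[OF assms(1,2) K, of g] by blast
  moreover have "umdim_M T (T g ` K) F \<le> umdim_M T K F"
    by (rule umdim_image[OF assms(1) K(1) Kne assms(3-5)])
  ultimately show "(INF K \<in> {K. K \<subseteq> X \<and> closed K \<and> (\<exists>U. open U \<and> T g x \<in> U \<and> U \<inter> X \<subseteq> K)}. umdim_M T K F) \<le> umdim_M T K F"
    by (rule INF_lower2)
qed

lemma local_invariant:
  assumes "G_system X T" "x \<in> X" "two_sided_folner_seq F"
  shows "local_umdim_M X T F (T g x) = local_umdim_M X T F x"
proof -
  have F: "\<And>n. finite (F n)" "\<And>n. F n \<noteq> {}"
    "\<And>g. (\<lambda>n. real (card (symdiff (right_transl (F n) g) (F n))) / real (card (F n))) \<longlonglongrightarrow> 0"
    using assms(3) unfolding two_sided_folner_seq_def folner_seq_def by auto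
  have 1: "local_umdim_M X T F (T g x) \<le> local_umdim_M X T F x" by (rule local_image_le[OF assms(1,2) F])
  have "T g x \<in> X" using Gs(2)[OF assms(1) assms(2)] .
  from local_image_le[OF assms(1) this F(1,2) F(3)[of "-g"]]
  have "local_umdim_M X T F (T (-g) (T g x)) \<le> local_umdim_M X T F (T g x)" .
  hence "local_umdim_M X T F x \<le> local_umdim_M X T F (T g x)" using Gs_inv(1)[OF assms(1,2)] by simp
  with 1 show ?thesis by simp
qed

lemma full_set_closed:
  assumes "compact X"
  shows "closed {x \<in> X. M \<le> local_umdim_M X T F x}"
proof (subst closed_sequential_limits, intro allI impI, elim conjE)
  fix xs l assume xs: "\<forall>n. xs n \<in> {x \<in> X. M \<le> local_umdim_M X T F x}" and l: "xs \<longlonglongrightarrow> l"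
  have lX: "l \<in> X" using closed_sequentially[OF compact_imp_closed[OF assms]] xs l by blast
  have "M \<le> local_umdim_M X T F l"
    unfolding local_umdim_M_def
  proof (rule INF_greatest)
    fix K assume "K \<in> {K. K \<subseteq> X \<and> closed K \<and> (\<exists>U. open U \<and> l \<in> U \<and> U \<inter> X \<subseteq> K)}"
    then obtain U where K: "K \<subseteq> X" "closed K" "open U" "l \<in> U" "U \<inter> X \<subseteq> K" by blast
    have "eventually (\<lambda>n. xs n \<in> U) sequentially" using topological_tendstoD[OF l K(3,4)] .
    then obtain n where n: "xs n \<in> U" by (meson eventually_sequentially order.refl)
    have "K \<in> {K. K \<subseteq> X \<and> closed K \<and> (\<exists>U. open U \<and> xs n \<in> U \<and> U \<inter> X \<subseteq> K)}"
      using K n by blast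
    hence "local_umdim_M X T F (xs n) \<le> umdim_M T K F" unfolding local_umdim_M_def by (rule INF_lower)
    moreover have "M \<le> local_umdim_M X T F (xs n)" using xs by blast
    ultimately show "M \<le> umdim_M T K F" by simp
  qed
  thus "l \<in> {x \<in> X. M \<le> local_umdim_M X T F x}" using lX by blast
qed

definition wt :: "nat \<Rightarrow> real" where "wt m = 2 / 3 ^ Suc m"

definition enc :: "(nat \<Rightarrow> bool) \<Rightarrow> real" where "enc \<alpha> = (\<Sum>m. if \<alpha> m then wt m else 0)"

lemma wt_pos: "wt m > 0" unfolding wt_def by simp

lemma wt_geom: "wt (m + k) = (2 / 3 ^ Suc k) * (1/3) ^ m"
  unfolding wt_def by (simp add: power_add power_one_over field_simps)

lemma wt_tail: "(\<lambda>m. wt (m + k)) sums (1 / 3 ^ k)"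
proof -
  have "(\<lambda>m. (2 / 3 ^ Suc k) * (1/3::real) ^ m) sums ((2 / 3 ^ Suc k) * (1 / (1 - 1/3)))"
    by (intro sums_mult geometric_sums) simp
  moreover have "(2 / 3 ^ Suc k) * (1 / (1 - 1/3)) = (1 / 3 ^ k :: real)" by simp
  ultimately show ?thesis unfolding wt_geom by simp
qed

lemma summable_wt: "summable wt" using wt_tail[of 0] by (simp add: sums_summable)

lemma sum_wt: "(\<Sum>m. wt m) = 1" using wt_tail[of 0] by (simp add: sums_iff)

lemma summable_encterm: "summable (\<lambda>m. if \<alpha> m then wt m else 0)"
  by (rule summable_comparison_test[OF _ summable_wt]) (auto simp: less_imp_le[OF wt_pos])

lemma enc_bounds: "0 \<le> enc \<alpha>" "enc \<alpha> \<le> 1"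
proof -
  show "0 \<le> enc \<alpha>" unfolding enc_def
    by (rule suminf_nonneg[OF summable_encterm]) (auto simp: less_imp_le[OF wt_pos])
  have "enc \<alpha> \<le> (\<Sum>m. wt m)" unfolding enc_def
    by (rule suminf_le[OF _ summable_encterm summable_wt]) (auto simp: less_imp_le[OF wt_pos])
  thus "enc \<alpha> \<le> 1" using sum_wt by simp
qed

lemma enc_gap:
  assumes "\<alpha> j \<noteq> \<beta> j" "\<forall>m<j. \<alpha> m = \<beta> m"
  shows "\<bar>enc \<alpha> - enc \<beta>\<bar> \<ge> 1 / 3 ^ Suc j"
proof -
  define d where "d m = (if \<alpha> m then wt m else 0) - (if \<beta> m then wt m else 0)" for m
  have sd: "summable d" unfolding d_def by (intro summable_diff summable_encterm)
  have absd: "\<bar>d m\<bar> \<le> wt m" for m unfolding d_def using wt_pos[of m] by auto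
  have "enc \<alpha> - enc \<beta> = suminf d" unfolding enc_def d_def
    by (rule suminf_diff[OF summable_encterm summable_encterm])
  also have "\<dots> = (\<Sum>n. d (n + Suc j)) + sum d {..<Suc j}"
    by (rule suminf_split_initial_segment[OF sd])
  also have "sum d {..<Suc j} = d j"
  proof -
    have "sum d {..<j} = 0" using assms(2) unfolding d_def by (intro sum.neutral) auto
    thus ?thesis by simp
  qed
  finally have eq: "enc \<alpha> - enc \<beta> = (\<Sum>n. d (n + Suc j)) + d j" .
  have dj: "\<bar>d j\<bar> = 2 / 3 ^ Suc j" using assms(1) unfolding d_def wt_def by auto
  have st: "summable (\<lambda>n. d (n + Suc j))" using sd by (rule summable_ignore_initial_segment)
  have sat: "summable (\<lambda>n. \<bar>d (n + Suc j)\<bar>)"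
    by (rule summable_comparison_test[OF _ sums_summable[OF wt_tail[of "Suc j"]]]) (use absd in auto)
  have "\<bar>\<Sum>n. d (n + Suc j)\<bar> \<le> (\<Sum>n. \<bar>d (n + Suc j)\<bar>)" by (rule summable_rabs[OF sat])
  also have "\<dots> \<le> (\<Sum>n. wt (n + Suc j))"
    by (rule suminf_le[OF _ sat sums_summable[OF wt_tail[of "Suc j"]]]) (use absd in auto)
  also have "\<dots> = 1 / 3 ^ Suc j" using wt_tail[of "Suc j"] by (simp add: sums_iff)
  finally have tl: "\<bar>\<Sum>n. d (n + Suc j)\<bar> \<le> 1 / 3 ^ Suc j" .
  have "\<bar>enc \<alpha> - enc \<beta>\<bar> \<ge> \<bar>d j\<bar> - \<bar>\<Sum>n. d (n + Suc j)\<bar>" unfolding eq by linarith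
  moreover have "\<bar>d j\<bar> - \<bar>\<Sum>n. d (n + Suc j)\<bar> \<ge> 2 / 3 ^ Suc j - 1 / 3 ^ Suc j" using dj tl by linarith
  moreover have "2 / 3 ^ Suc j - 1 / 3 ^ Suc j = (1 / 3 ^ Suc j :: real)" by (simp add: diff_divide_distrib)
  ultimately show ?thesis by linarith
qed

lemma enc_gap2:
  assumes "\<alpha> m \<noteq> \<beta> m" "m \<le> n"
  shows "\<bar>enc \<alpha> - enc \<beta>\<bar> \<ge> 1 / 3 ^ Suc n"
proof -
  define j where "j = (LEAST j. \<alpha> j \<noteq> \<beta> j)"
  have j: "\<alpha> j \<noteq> \<beta> j" unfolding j_def by (rule LeastI[of _ m]) (rule assms(1))
  have jm: "j \<le> m" unfolding j_def by (rule Least_le) (rule assms(1))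
  have "\<forall>i<j. \<alpha> i = \<beta> i" unfolding j_def using not_less_Least by blast
  from enc_gap[OF j this] have "\<bar>enc \<alpha> - enc \<beta>\<bar> \<ge> 1 / 3 ^ Suc j" .
  moreover have "(1::real) / 3 ^ Suc n \<le> 1 / 3 ^ Suc j" using jm assms(2)
    by (intro divide_left_mono power_increasing) auto
  ultimately show ?thesis by linarith
qed


lemma lin3:
  assumes "(A::real) \<le> x + z + y" "x < (d - z)/2" "y < (d - z)/2"
  shows "A < d"
proof -
  have "2 * x < d - z" "2 * y < d - z" using assms(2,3) by simp_all
  thus ?thesis using assms(1) by linarith
qed

locale cmet =
  fixes X :: "'a::metric_space set"
  assumes cX: "compact X" and neX: "X \<noteq> {}"
begin

definition kn :: "nat \<Rightarrow> 'a set" where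
  "kn = (SOME kn. \<forall>n. finite (kn n) \<and> kn n \<subseteq> X \<and> (\<forall>y\<in>X. \<exists>c\<in>kn n. dist y c < 1/(real n+1)))"

lemma kn_ex: "\<exists>kn. \<forall>n. finite (kn n) \<and> kn n \<subseteq> X \<and> (\<forall>y\<in>X. \<exists>c\<in>kn n. dist y c < 1/(real n+1))"
proof -
  have "\<forall>n. \<exists>k. finite k \<and> k \<subseteq> X \<and> (\<forall>y\<in>X. \<exists>c\<in>k. dist y c < 1/(real n+1))"
    using net_exists[OF cX] by simp
  thus ?thesis by (rule choice)
qed

lemma kn: "finite (kn n)" "kn n \<subseteq> X" "y \<in> X \<Longrightarrow> \<exists>c\<in>kn n. dist y c < 1/(real n+1)"
proof -
  have "\<forall>n. finite (kn n) \<and> kn n \<subseteq> X \<and> (\<forall>y\<in>X. \<exists>c\<in>kn n. dist y c < 1/(real n+1))"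
    unfolding kn_def by (rule someI_ex[OF kn_ex])
  thus "finite (kn n)" "kn n \<subseteq> X" "y \<in> X \<Longrightarrow> \<exists>c\<in>kn n. dist y c < 1/(real n+1)" by auto
qed

definition idx :: "nat \<Rightarrow> nat \<times> 'a" where "idx = from_nat_into (SIGMA n:UNIV. kn n)"

lemma idx_surj:
  assumes "c \<in> kn n"
  shows "\<exists>m. idx m = (n, c)"
proof -
  have ne: "(SIGMA n:UNIV. kn n) \<noteq> {}" using assms by blast
  have "countable (SIGMA n:UNIV. kn n)" by (intro countable_SIGMA) (auto intro: countable_finite kn(1))
  hence "range idx = (SIGMA n:UNIV. kn n)" unfolding idx_def using range_from_nat_into[OF ne] by blast
  moreover have "(n, c) \<in> (SIGMA n:UNIV. kn n)" using assms by blast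
  ultimately have "(n, c) \<in> range idx" by simp
  thus ?thesis by (auto simp: image_iff)
qed

definition Bm :: "nat \<Rightarrow> 'a set" where "Bm m = cball (snd (idx m)) (1/(real (fst (idx m))+1))"

definition s :: "'a \<Rightarrow> real" where "s x = enc (\<lambda>m. x \<in> Bm m)"

lemma s_range: "0 \<le> s x" "s x \<le> 1" unfolding s_def by (rule enc_bounds)+

lemma s_meas: "s \<in> borel_measurable borel"
  unfolding s_def enc_def
proof (rule borel_measurable_suminf)
  fix m
  have "Bm m \<inter> space borel \<in> sets borel" unfolding Bm_def by simp
  thus "(\<lambda>x. if x \<in> Bm m then wt m else 0) \<in> borel_measurable borel"
    by (intro measurable_If_set) auto
qed

lemma s_modulus:
  assumes "\<epsilon> > 0"
  shows "\<exists>\<delta>>0. \<forall>x\<in>X. \<forall>y\<in>X. \<bar>s x - s y\<bar> < \<delta> \<longrightarrow> dist x y < \<epsilon>"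
proof -
  obtain n :: nat where n: "2 / \<epsilon> < real n" using reals_Archimedean2 by blast
  define \<rho> where "\<rho> = 1 / (real n + 1)"
  have \<rho>: "2 * \<rho> < \<epsilon>"
  proof -
    have "2 < real n * \<epsilon>" using n assms by (simp add: pos_divide_less_eq)
    moreover have "\<epsilon> * (real n + 1) = real n * \<epsilon> + \<epsilon>" by (simp add: algebra_simps)
    ultimately have "2 < \<epsilon> * (real n + 1)" using assms by linarith
    hence "2 / (real n + 1) < \<epsilon>" by (simp add: pos_divide_less_eq)
    thus ?thesis unfolding \<rho>_def by simp
  qed
  define mc where "mc c = (SOME m. idx m = (n, c))" for c
  have mc: "idx (mc c) = (n, c)" if "c \<in> kn n" for c
    unfolding mc_def by (rule someI_ex) (rule idx_surj[OF that])
  define J where "J = Max (mc ` kn n)"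
  have J: "mc c \<le> J" if "c \<in> kn n" for c unfolding J_def using kn(1) that by auto
  show ?thesis
  proof (intro exI[of _ "1 / 3 ^ Suc J"] conjI ballI impI)
    show "(0::real) < 1 / 3 ^ Suc J" by simp
    fix x y assume xy: "x \<in> X" "y \<in> X" "\<bar>s x - s y\<bar> < 1 / 3 ^ Suc J"
    obtain c where c: "c \<in> kn n" "dist x c < \<rho>" using kn(3)[OF xy(1)] \<rho>_def by blast
    have B: "Bm (mc c) = cball c \<rho>" unfolding Bm_def mc[OF c(1)] \<rho>_def by simp
    have xB: "x \<in> Bm (mc c)" using B c(2) by (simp add: dist_commute)
    have yB: "y \<in> Bm (mc c)"
    proof (rule ccontr)
      assume "y \<notin> Bm (mc c)"
      hence "(\<lambda>m. x \<in> Bm m) (mc c) \<noteq> (\<lambda>m. y \<in> Bm m) (mc c)" using xB by simp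
      from enc_gap2[where \<alpha>="\<lambda>m. x \<in> Bm m" and \<beta>="\<lambda>m. y \<in> Bm m", OF this J[OF c(1)]] xy(3) show False unfolding s_def by simp
    qed
    hence "dist c y \<le> \<rho>" using B by simp
    hence "dist x y < 2 * \<rho>" using c(2) dist_triangle[of x y c] by simp
    thus "dist x y < \<epsilon>" using \<rho> by simp
  qed
qed

definition Cs :: "real set" where "Cs = closure (s ` X)"

lemma Cs_closed: "closed Cs" unfolding Cs_def by (rule closed_closure)

lemma Cs_sub: "Cs \<subseteq> {0..1}"
  unfolding Cs_def
proof (rule closure_minimal)
  show "s ` X \<subseteq> {0..1}" using s_range by (simp add: image_subset_iff)
  show "closed {0..1::real}" by (rule closed_atLeastAtMost)
qed

lemma s_in_Cs: "x \<in> X \<Longrightarrow> s x \<in> Cs"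
proof -
  assume "x \<in> X"
  hence "s x \<in> s ` X" by (rule imageI)
  thus "s x \<in> Cs" unfolding Cs_def using closure_subset[of "s ` X"] by (rule subsetD[rotated])
qed

definition Pt :: "real \<Rightarrow> 'a \<Rightarrow> bool" where
  "Pt t y \<longleftrightarrow> y \<in> X \<and> (\<exists>xs. (\<forall>n. xs n \<in> X) \<and> (\<lambda>n. s (xs n)) \<longlonglongrightarrow> t \<and> xs \<longlonglongrightarrow> y)"

lemma Pt_exists:
  assumes "t \<in> Cs"
  shows "\<exists>y. Pt t y"
proof -
  have ex: "\<exists>ts. (\<forall>n. ts n \<in> s ` X) \<and> ts \<longlonglongrightarrow> t" using assms unfolding Cs_def closure_sequential .
  define ts where "ts = (SOME ts. (\<forall>n. ts n \<in> s ` X) \<and> ts \<longlonglongrightarrow> t)"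
  have ts: "(\<forall>n. ts n \<in> s ` X) \<and> ts \<longlonglongrightarrow> t" unfolding ts_def by (rule someI_ex[OF ex])
  have exx: "\<exists>x. x \<in> X \<and> s x = ts n" for n
  proof -
    have "ts n \<in> s ` X" using ts by simp
    then obtain x where "ts n = s x" "x \<in> X" by (rule imageE)
    thus ?thesis by (intro exI[of _ x]) simp
  qed
  define xs where "xs n = (SOME x. x \<in> X \<and> s x = ts n)" for n
  have xs': "xs n \<in> X \<and> s (xs n) = ts n" for n unfolding xs_def by (rule someI_ex[OF exx])
  have xsX: "\<forall>n. xs n \<in> X" using xs' by simp
  obtain y r where yr: "y \<in> X" "strict_mono r" "(xs \<circ> r) \<longlonglongrightarrow> y"
    by (rule seq_compactE[OF compact_imp_seq_compact[OF cX] xsX])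
  have tsl: "ts \<longlonglongrightarrow> t" using ts by simp
  have "(ts \<circ> r) \<longlonglongrightarrow> t" by (rule LIMSEQ_subseq_LIMSEQ[OF tsl yr(2)])
  moreover have "ts \<circ> r = (\<lambda>n. s ((xs \<circ> r) n))" using xs' by (simp add: o_def)
  ultimately have l: "(\<lambda>n. s ((xs \<circ> r) n)) \<longlonglongrightarrow> t" by simp
  have "\<forall>n. (xs \<circ> r) n \<in> X" using xsX by simp
  hence "Pt t y" unfolding Pt_def using yr(1,3) l by blast
  thus ?thesis by (rule exI)
qed

lemma Pt_seq:
  assumes "Pt t y"
  obtains xs where "\<forall>n. xs n \<in> X" "(\<lambda>n. s (xs n)) \<longlonglongrightarrow> t" "xs \<longlonglongrightarrow> y"
proof -
  have ex: "\<exists>xs. (\<forall>n. xs n \<in> X) \<and> (\<lambda>n. s (xs n)) \<longlonglongrightarrow> t \<and> xs \<longlonglongrightarrow> y"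
    using assms unfolding Pt_def by (rule conjunct2)
  define xs where "xs = (SOME xs. (\<forall>n. xs n \<in> X) \<and> (\<lambda>n. s (xs n)) \<longlonglongrightarrow> t \<and> xs \<longlonglongrightarrow> y)"
  have "(\<forall>n. xs n \<in> X) \<and> (\<lambda>n. s (xs n)) \<longlonglongrightarrow> t \<and> xs \<longlonglongrightarrow> y" unfolding xs_def by (rule someI_ex[OF ex])
  hence "\<forall>n. xs n \<in> X" "(\<lambda>n. s (xs n)) \<longlonglongrightarrow> t" "xs \<longlonglongrightarrow> y" by simp_all
  thus ?thesis by (rule that)
qed

lemma Pt_modulus:
  assumes "\<epsilon> > 0"
  shows "\<exists>\<delta>>0. \<forall>t t' y y'. Pt t y \<longrightarrow> Pt t' y' \<longrightarrow> \<bar>t - t'\<bar> < \<delta> \<longrightarrow> dist y y' \<le> \<epsilon>"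
proof -
  have ex: "\<exists>\<delta>>0. \<forall>x\<in>X. \<forall>y\<in>X. \<bar>s x - s y\<bar> < \<delta> \<longrightarrow> dist x y < \<epsilon>" by (rule s_modulus[OF assms])
  define \<delta> where "\<delta> = (SOME \<delta>. \<delta> > 0 \<and> (\<forall>x\<in>X. \<forall>y\<in>X. \<bar>s x - s y\<bar> < \<delta> \<longrightarrow> dist x y < \<epsilon>))"
  have \<delta>: "\<delta> > 0 \<and> (\<forall>x\<in>X. \<forall>y\<in>X. \<bar>s x - s y\<bar> < \<delta> \<longrightarrow> dist x y < \<epsilon>)" unfolding \<delta>_def by (rule someI_ex[OF ex])
  have \<delta>1: "\<delta> > 0" using \<delta> by simp
  have \<delta>2: "dist x y < \<epsilon>" if "x \<in> X" "y \<in> X" "\<bar>s x - s y\<bar> < \<delta>" for x y using \<delta> that by simp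
  have main: "dist y y' \<le> \<epsilon>" if P: "Pt t y" "Pt t' y'" and tt: "\<bar>t - t'\<bar> < \<delta>" for t t' y y'
  proof -
    obtain xs where xs: "\<forall>n. xs n \<in> X" "(\<lambda>n. s (xs n)) \<longlonglongrightarrow> t" "xs \<longlonglongrightarrow> y" by (rule Pt_seq[OF P(1)])
    obtain ys where ys: "\<forall>n. ys n \<in> X" "(\<lambda>n. s (ys n)) \<longlonglongrightarrow> t'" "ys \<longlonglongrightarrow> y'" by (rule Pt_seq[OF P(2)])
    define \<eta> where "\<eta> = (\<delta> - \<bar>t - t'\<bar>) / 2"
    have \<eta>: "\<eta> > 0" using tt unfolding \<eta>_def by simp
    have e1: "eventually (\<lambda>n. dist (s (xs n)) t < \<eta>) sequentially" using tendstoD[OF xs(2) \<eta>] .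
    have e2: "eventually (\<lambda>n. dist (s (ys n)) t' < \<eta>) sequentially" using tendstoD[OF ys(2) \<eta>] .
    have ev: "eventually (\<lambda>n. dist (xs n) (ys n) \<le> \<epsilon>) sequentially"
      using e1 e2
    proof eventually_elim
      case (elim n)
      have tri: "\<bar>s (xs n) - s (ys n)\<bar> \<le> \<bar>s (xs n) - t\<bar> + \<bar>t - t'\<bar> + \<bar>s (ys n) - t'\<bar>" by arith
      have e1': "\<bar>s (xs n) - t\<bar> < (\<delta> - \<bar>t - t'\<bar>) / 2" using elim(1) unfolding dist_real_def \<eta>_def .
      have e2': "\<bar>s (ys n) - t'\<bar> < (\<delta> - \<bar>t - t'\<bar>) / 2" using elim(2) unfolding dist_real_def \<eta>_def .
      have "\<bar>s (xs n) - s (ys n)\<bar> < \<delta>" by (rule lin3[OF tri e1' e2'])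
      hence "dist (xs n) (ys n) < \<epsilon>" by (rule \<delta>2[OF xs(1)[rule_format] ys(1)[rule_format]])
      thus ?case by simp
    qed
    have lim: "(\<lambda>n. dist (xs n) (ys n)) \<longlonglongrightarrow> dist y y'" by (rule tendsto_dist[OF xs(3) ys(3)])
    show "dist y y' \<le> \<epsilon>" by (rule tendsto_upperbound[OF lim ev]) simp
  qed
  show ?thesis
    by (rule exI[of _ \<delta>], rule conjI[OF \<delta>1], intro allI impI, rule main)
qed

lemma Pt_unique:
  assumes "Pt t y" "Pt t y'"
  shows "y = y'"
proof (rule ccontr)
  assume "y \<noteq> y'"
  hence pos: "dist y y' / 2 > 0" by simp
  have ex: "\<exists>\<delta>>0. \<forall>a b u v. Pt a u \<longrightarrow> Pt b v \<longrightarrow> \<bar>a - b\<bar> < \<delta> \<longrightarrow> dist u v \<le> dist y y' / 2"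
    by (rule Pt_modulus[OF pos])
  define \<delta> where "\<delta> = (SOME \<delta>. \<delta> > 0 \<and> (\<forall>a b u v. Pt a u \<longrightarrow> Pt b v \<longrightarrow> \<bar>a - b\<bar> < \<delta> \<longrightarrow> dist u v \<le> dist y y' / 2))"
  have d: "\<delta> > 0 \<and> (\<forall>a b u v. Pt a u \<longrightarrow> Pt b v \<longrightarrow> \<bar>a - b\<bar> < \<delta> \<longrightarrow> dist u v \<le> dist y y' / 2)"
    unfolding \<delta>_def by (rule someI_ex[OF ex])
  have "\<bar>t - t\<bar> < \<delta>" using d by simp
  hence "dist y y' \<le> dist y y' / 2" using d assms by blast
  thus False using \<open>y \<noteq> y'\<close> by simp
qed

definition pi :: "real \<Rightarrow> 'a" where "pi t = (SOME y. Pt t y)"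

lemma pi: "t \<in> Cs \<Longrightarrow> Pt t (pi t)"
  unfolding pi_def by (rule someI_ex[OF Pt_exists])

lemma pi_in: "t \<in> Cs \<Longrightarrow> pi t \<in> X" using pi unfolding Pt_def by blast

lemma pi_s: "x \<in> X \<Longrightarrow> pi (s x) = x"
proof -
  assume x: "x \<in> X"
  have "Pt (s x) x" unfolding Pt_def
    by (rule conjI[OF x], rule exI[of _ "\<lambda>_. x"]) (use x in simp)
  thus ?thesis by (rule Pt_unique[OF pi[OF s_in_Cs[OF x]]])
qed

lemma pi_cont: "continuous_on Cs pi"
  unfolding continuous_on_iff
proof (intro ballI allI impI)
  fix t and e :: real assume t: "t \<in> Cs" and e: "e > 0"
  have pos: "e/2 > 0" using e by simp
  have ex: "\<exists>\<delta>>0. \<forall>a b u v. Pt a u \<longrightarrow> Pt b v \<longrightarrow> \<bar>a - b\<bar> < \<delta> \<longrightarrow> dist u v \<le> e/2"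
    by (rule Pt_modulus[OF pos])
  define \<delta> where "\<delta> = (SOME \<delta>. \<delta> > 0 \<and> (\<forall>a b u v. Pt a u \<longrightarrow> Pt b v \<longrightarrow> \<bar>a - b\<bar> < \<delta> \<longrightarrow> dist u v \<le> e/2))"
  have d: "\<delta> > 0 \<and> (\<forall>a b u v. Pt a u \<longrightarrow> Pt b v \<longrightarrow> \<bar>a - b\<bar> < \<delta> \<longrightarrow> dist u v \<le> e/2)"
    unfolding \<delta>_def by (rule someI_ex[OF ex])
  show "\<exists>d>0. \<forall>x'\<in>Cs. dist x' t < d \<longrightarrow> dist (pi x') (pi t) < e"
  proof (rule exI[of _ \<delta>], rule conjI)
    show "\<delta> > 0" using d by simp
    show "\<forall>x'\<in>Cs. dist x' t < \<delta> \<longrightarrow> dist (pi x') (pi t) < e"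
    proof (intro ballI impI)
      fix t' assume t': "t' \<in> Cs" "dist t' t < \<delta>"
      have "\<bar>t' - t\<bar> < \<delta>" using t'(2) unfolding dist_real_def .
      hence "dist (pi t') (pi t) \<le> e/2" using d pi[OF t'(1)] pi[OF t] by blast
      thus "dist (pi t') (pi t) < e" using e by simp
    qed
  qed
qed
end

definition phik :: "'b::metric_space set \<Rightarrow> nat \<Rightarrow> 'b \<Rightarrow> real" where
  "phik C k x = max 0 (1 - real k * infdist x C)"

lemma phik_cont: "continuous_on S (phik C k)"
  unfolding phik_def by (intro continuous_intros)

lemma phik_in: "x \<in> C \<Longrightarrow> phik C k x = 1"
  unfolding phik_def by simp

lemma phik_bound: "\<bar>phik C k x\<bar> \<le> 1"
  unfolding phik_def using infdist_nonneg[of x C] by auto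

lemma phik_lim:
  assumes "closed C" "C \<noteq> {}"
  shows "(\<lambda>k. phik C k x) \<longlonglongrightarrow> indicator C x"
proof (cases "x \<in> C")
  case True
  then show ?thesis by (simp add: phik_in)
next
  case False
  have d: "infdist x C > 0" by (rule infdist_pos_not_in_closed[OF assms False])
  obtain N :: nat where N: "1 / infdist x C < real N" using reals_Archimedean2 by blast
  have "eventually (\<lambda>k. phik C k x = 0) sequentially"
    unfolding eventually_sequentially
  proof (intro exI[of _ N] allI impI)
    fix k assume "N \<le> k"
    hence "1 / infdist x C < real k" using N by linarith
    hence "1 < real k * infdist x C" using d by (simp add: divide_less_eq)
    thus "phik C k x = 0" unfolding phik_def by simp
  qed
  hence "(\<lambda>k. phik C k x) \<longlonglongrightarrow> 0" by (rule tendsto_eventually)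
  thus ?thesis using False by simp
qed

lemma closed_approx:
  fixes M :: "'b::metric_space measure"
  assumes fm: "finite_measure M" and C: "closed C" "C \<noteq> {}" and Cm: "C \<inter> space M \<in> sets M"
    and inm: "(\<lambda>x. infdist x C) \<in> borel_measurable M"
  shows "(\<lambda>k. integral\<^sup>L M (phik C k)) \<longlonglongrightarrow> measure M (C \<inter> space M)"
proof -
  interpret finite_measure M by (rule fm)
  have "(\<lambda>k. integral\<^sup>L M (phik C k)) \<longlonglongrightarrow> integral\<^sup>L M (indicator (C \<inter> space M))"
  proof (rule integral_dominated_convergence[where w="\<lambda>_. 1"])
    show "indicator (C \<inter> space M) \<in> borel_measurable M" using Cm by simp
    show "phik C k \<in> borel_measurable M" for k
    proof -
      have "(\<lambda>x. 1 - real k * infdist x C) \<in> borel_measurable M"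
        by (intro borel_measurable_diff borel_measurable_const borel_measurable_times inm)
      hence "(\<lambda>x. max 0 (1 - real k * infdist x C)) \<in> borel_measurable M"
        by (intro borel_measurable_max borel_measurable_const)
      thus ?thesis unfolding phik_def by simp
    qed
    show "integrable M (\<lambda>_. 1::real)" by simp
    show "AE x in M. (\<lambda>k. phik C k x) \<longlonglongrightarrow> indicator (C \<inter> space M) x"
    proof (rule AE_I2)
      fix x assume "x \<in> space M"
      hence "indicator (C \<inter> space M) x = (indicator C x :: real)" by (simp add: indicator_def)
      thus "(\<lambda>k. phik C k x) \<longlonglongrightarrow> indicator (C \<inter> space M) x" using phik_lim[OF C] by simp
    qed
    show "AE x in M. norm (phik C k x) \<le> 1" for k by (rule AE_I2) (simp add: phik_bound)
  qed
  thus ?thesis by simp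
qed


lemma tietze_real:
  fixes f :: "real \<Rightarrow> real"
  assumes "closed S" "continuous_on S f" "\<And>x. x \<in> S \<Longrightarrow> \<bar>f x\<bar> \<le> B" "B \<ge> 0"
  shows "\<exists>g. (\<forall>x. isCont g x) \<and> (\<forall>x. \<bar>g x\<bar> \<le> B) \<and> (\<forall>x\<in>S. g x = f x)"
proof -
  have ns: "normal_space (euclidean :: real topology)"
    by (rule metrizable_imp_normal_space[OF metrizable_space_euclidean])
  have cl: "closedin euclidean S" using assms(1) closed_closedin by blast
  have cm: "continuous_map (top_of_set S) euclidean f" using assms(2) by simp
  have im: "f ` S \<subseteq> {-B..B}"
  proof
    fix y assume "y \<in> f ` S"
    then obtain x where x: "x \<in> S" "y = f x" by blast
    have "\<bar>f x\<bar> \<le> B" by (rule assms(3)[OF x(1)])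
    thus "y \<in> {-B..B}" using x(2) by (simp add: abs_le_iff)
  qed
  obtain g where g: "continuous_map euclidean euclidean g" "g ` topspace euclidean \<subseteq> {-B..B}" "\<And>x. x \<in> S \<Longrightarrow> g x = f x"
    using Tietze_extension_realinterval[OF ns cl is_interval_cc _ cm im] assms(4) by auto
  have "continuous_on UNIV g" using g(1) by (metis continuous_map_iff_continuous subtopology_UNIV)
  hence "\<forall>x. isCont g x" by (simp add: continuous_on_eq_continuous_at)
  moreover have "\<forall>x. \<bar>g x\<bar> \<le> B"
  proof
    fix x
    have "\<forall>x. g x \<in> {-B..B}" using g(2) by (simp add: image_subset_iff)
    hence "g x \<in> {-B..B}" by blast
    thus "\<bar>g x\<bar> \<le> B" by (simp add: abs_le_iff)
  qed
  ultimately show ?thesis using g(3) by blast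
qed

locale kb = cmet X for X :: "'a::metric_space set" +
  fixes T :: "'g::group_add \<Rightarrow> 'a \<Rightarrow> 'a" and F :: "nat \<Rightarrow> 'g set" and A :: "'a set" and x0 :: 'a
  assumes Gsys: "G_system X T" and Ffin: "\<And>n. finite (F n)" and Fne: "\<And>n. F n \<noteq> {}"
    and Fol: "\<And>g. (\<lambda>n. real (card (symdiff (left_transl g (F n)) (F n))) / real (card (F n))) \<longlonglongrightarrow> 0"
    and Acl: "closed A" and AX: "A \<subseteq> X" and x0A: "x0 \<in> A" and Ainv: "\<And>g x. x \<in> A \<Longrightarrow> T g x \<in> A"
begin

lemma x0X: "x0 \<in> X" using x0A AX by blast

lemma orbX: "T g x0 \<in> X" using Ainv[OF x0A] AX by blast

definition nu :: "nat \<Rightarrow> real measure" where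
  "nu n = distr (measure_pmf (pmf_of_set (F n))) borel (\<lambda>g. s (T g x0))"

definition avg :: "nat \<Rightarrow> ('a \<Rightarrow> real) \<Rightarrow> real" where
  "avg n f = (\<Sum>g\<in>F n. f (T g x0)) / real (card (F n))"

lemma nu_meas: "(\<lambda>g. s (T g x0)) \<in> measure_pmf (pmf_of_set (F n)) \<rightarrow>\<^sub>M borel" by simp

lemma nu_rd: "real_distribution (nu n)"
proof -
  have "prob_space (nu n)" unfolding nu_def by (rule prob_space.prob_space_distr[OF prob_space_measure_pmf nu_meas])
  moreover have "sets (nu n) = sets borel" unfolding nu_def by simp
  ultimately show ?thesis unfolding real_distribution_def real_distribution_axioms_def by simp
qed

lemma nu_int:
  assumes "h \<in> borel_measurable borel"
  shows "integral\<^sup>L (nu n) h = avg n (\<lambda>x. h (s x))"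
proof -
  have "integral\<^sup>L (nu n) h = integral\<^sup>L (measure_pmf (pmf_of_set (F n))) (\<lambda>g. h (s (T g x0)))"
    unfolding nu_def by (rule integral_distr[OF nu_meas assms])
  also have "\<dots> = avg n (\<lambda>x. h (s x))" unfolding avg_def
    by (rule integral_pmf_of_set[OF Fne Ffin])
  finally show ?thesis .
qed

lemma nu_tight: "tight nu"
  unfolding tight_def
proof (rule conjI)
  show "\<forall>n. real_distribution (nu n)" using nu_rd by simp
  show "\<forall>e>0. \<exists>a b::real. a < b \<and> (\<forall>n. measure (nu n) {a<..b} > 1 - e)"
  proof (intro allI impI)
    fix e :: real assume e: "e > 0"
    have "measure (nu n) {-1<..2} > 1 - e" for n
    proof -
      have "measure (nu n) {-1<..2} = measure (measure_pmf (pmf_of_set (F n))) ((\<lambda>g. s (T g x0)) -` {-1<..2} \<inter> UNIV)"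
        unfolding nu_def by (subst measure_distr[OF nu_meas]) auto
      also have "(\<lambda>g. s (T g x0)) -` {-1<..2} \<inter> UNIV = UNIV"
      proof -
        have "s (T g x0) \<in> {-1<..2}" for g using s_range[of "T g x0"] by simp
        thus ?thesis by blast
      qed
      also have "measure (measure_pmf (pmf_of_set (F n))) UNIV = 1" using prob_space.prob_space[OF prob_space_measure_pmf, of "pmf_of_set (F n)"] by simp
      finally show ?thesis using e by simp
    qed
    thus "\<exists>a b::real. a < b \<and> (\<forall>n. measure (nu n) {a<..b} > 1 - e)"
      by (intro exI[of _ "-1"] exI[of _ "2"]) simp
  qed
qed

definition rnu :: "(nat \<Rightarrow> nat) \<times> real measure" where
  "rnu = (SOME p. strict_mono (fst p) \<and> real_distribution (snd p) \<and> weak_conv_m (nu \<circ> fst p) (snd p))"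

definition rr :: "nat \<Rightarrow> nat" where "rr = fst rnu"
definition nuL :: "real measure" where "nuL = snd rnu"

lemma rnu: "strict_mono rr" "real_distribution nuL" "weak_conv_m (nu \<circ> rr) nuL"
proof -
  obtain r M where "strict_mono (r :: nat \<Rightarrow> nat)" "real_distribution M" "weak_conv_m (nu \<circ> id \<circ> r) M"
    using tight_imp_convergent_subsubsequence[OF nu_tight strict_mono_id] by blast
  hence ex: "\<exists>p. strict_mono (fst p) \<and> real_distribution (snd p) \<and> weak_conv_m (nu \<circ> fst p) (snd p)"
    by (intro exI[of _ "(r, M)"]) simp
  have "strict_mono (fst rnu) \<and> real_distribution (snd rnu) \<and> weak_conv_m (nu \<circ> fst rnu) (snd rnu)"
    unfolding rnu_def by (rule someI_ex[OF ex])
  thus "strict_mono rr" "real_distribution nuL" "weak_conv_m (nu \<circ> rr) nuL"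
    unfolding rr_def nuL_def by simp_all
qed

lemma conv_h:
  assumes "\<And>x. isCont h x" "\<And>x. \<bar>h x\<bar> \<le> B"
  shows "(\<lambda>n. avg (rr n) (\<lambda>x. h (s x))) \<longlonglongrightarrow> integral\<^sup>L nuL h"
proof -
  have rd: "\<And>n. real_distribution ((nu \<circ> rr) n)" using nu_rd by simp
  have "(\<lambda>n. integral\<^sup>L ((nu \<circ> rr) n) h) \<longlonglongrightarrow> integral\<^sup>L nuL h"
    by (rule weak_conv_imp_integral_bdd_continuous_conv[OF rd rnu(2) rnu(3) assms(1)]) (use assms(2) in simp)
  moreover have "h \<in> borel_measurable borel"
    using assms(1) by (intro borel_measurable_continuous_onI continuous_at_imp_continuous_on) auto
  ultimately show ?thesis using nu_int by simp
qed

lemma avg_const: "avg n (\<lambda>_. c) = c"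
  unfolding avg_def using Ffin[of n] Fne[of n] by simp

lemma avg_cong: "(\<And>g. g \<in> F n \<Longrightarrow> f (T g x0) = f' (T g x0)) \<Longrightarrow> avg n f = avg n f'"
  unfolding avg_def by (simp cong: sum.cong)

lemma nuL_fin: "finite_measure nuL"
proof -
  interpret rd: real_distribution nuL by (rule rnu(2))
  show ?thesis by (rule finite_measureI) (simp add: rd.emeasure_space_1)
qed

lemma nuL_Cs: "measure nuL Cs = 1"
proof -
  interpret rd: real_distribution nuL by (rule rnu(2))
  have Cne: "Cs \<noteq> {}" using s_in_Cs[OF x0X] by blast
  have sp: "space nuL = UNIV" by simp
  have Cm: "Cs \<inter> space nuL \<in> sets nuL" using Cs_closed by simp
  have inm: "(\<lambda>x. infdist x Cs) \<in> borel_measurable nuL"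
  proof -
    have "(\<lambda>x. infdist x Cs) \<in> borel_measurable borel"
      by (rule borel_measurable_continuous_onI) (intro continuous_intros)
    thus ?thesis using measurable_cong_sets[OF rd.events_eq_borel refl] by simp
  qed
  have lim: "(\<lambda>k. integral\<^sup>L nuL (phik Cs k)) \<longlonglongrightarrow> measure nuL (Cs \<inter> space nuL)"
    by (rule closed_approx[OF nuL_fin Cs_closed Cne Cm inm])
  have one: "integral\<^sup>L nuL (phik Cs k) = 1" for k
  proof -
    have ic: "isCont (phik Cs k) x" for x
      using phik_cont[of UNIV Cs k] by (simp add: continuous_on_eq_continuous_at)
    have "(\<lambda>n. avg (rr n) (\<lambda>x. phik Cs k (s x))) \<longlonglongrightarrow> integral\<^sup>L nuL (phik Cs k)"
      by (rule conv_h[OF ic phik_bound])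
    moreover have "avg (rr n) (\<lambda>x. phik Cs k (s x)) = 1" for n
    proof -
      have "avg (rr n) (\<lambda>x. phik Cs k (s x)) = avg (rr n) (\<lambda>_. 1)"
        by (rule avg_cong) (simp add: phik_in s_in_Cs orbX)
      thus ?thesis by (simp add: avg_const)
    qed
    ultimately have "(\<lambda>n. 1) \<longlonglongrightarrow> integral\<^sup>L nuL (phik Cs k)" by simp
    thus ?thesis using LIMSEQ_unique tendsto_const by metis
  qed
  have "(\<lambda>k. 1) \<longlonglongrightarrow> measure nuL Cs" using lim one by simp
  thus ?thesis using LIMSEQ_unique tendsto_const by metis
qed

definition pi' :: "real \<Rightarrow> 'a" where "pi' t = (if t \<in> Cs then pi t else x0)"

lemma pi'_meas_borel: "pi' \<in> borel \<rightarrow>\<^sub>M restrict_space borel X"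
proof (rule measurable_restrict_space2)
  show "pi' \<in> space borel \<rightarrow> X" unfolding pi'_def using pi_in x0X by auto
  have c: "{x \<in> space borel. x \<in> Cs} \<in> sets borel" using Cs_closed by simp
  have "pi \<in> restrict_space borel {x. x \<in> Cs} \<rightarrow>\<^sub>M borel"
    using borel_measurable_continuous_on_restrict[OF pi_cont] by simp
  moreover have "(\<lambda>_. x0) \<in> restrict_space borel {x. x \<notin> Cs} \<rightarrow>\<^sub>M borel" by simp
  ultimately show "pi' \<in> borel \<rightarrow>\<^sub>M borel"
    unfolding pi'_def by (intro measurable_If_restrict_space_iff[OF c, THEN iffD2] conjI)
qed

lemma pi'_meas: "pi' \<in> nuL \<rightarrow>\<^sub>M restrict_space borel X"
proof -
  interpret rd: real_distribution nuL by (rule rnu(2))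
  show ?thesis using pi'_meas_borel measurable_cong_sets[OF rd.events_eq_borel refl] by simp
qed

definition mu :: "'a measure" where "mu = distr nuL (restrict_space borel X) pi'"

lemma mu_prob: "prob_space mu"
proof -
  interpret rd: real_distribution nuL by (rule rnu(2))
  show ?thesis unfolding mu_def by (rule rd.prob_space_distr[OF pi'_meas])
qed

lemma mu_sets: "sets mu = sets (restrict_space borel X)" unfolding mu_def by simp

lemma mu_space: "space mu = X" unfolding mu_def by (simp add: space_restrict_space)

lemma mu_int:
  fixes f :: "'a \<Rightarrow> real"
  assumes "f \<in> borel_measurable (restrict_space borel X)"
  shows "integral\<^sup>L mu f = integral\<^sup>L nuL (\<lambda>t. f (pi' t))"
  unfolding mu_def by (rule integral_distr[OF pi'_meas assms])

lemma bounded_on_X: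
  assumes "continuous_on X f"
  shows "\<exists>B\<ge>0. \<forall>x\<in>X. \<bar>f x :: real\<bar> \<le> B"
proof -
  have "compact (f ` X)" by (rule compact_continuous_image[OF assms cX])
  hence "bounded (f ` X)" by (rule compact_imp_bounded)
  then obtain B where B: "\<forall>y\<in>f ` X. \<bar>y\<bar> \<le> B" unfolding bounded_real by blast
  have "B \<ge> 0" using B x0X by force
  thus ?thesis using B by blast
qed

lemma lim_avg:
  assumes fc: "continuous_on X f"
  shows "(\<lambda>n. avg (rr n) f) \<longlonglongrightarrow> integral\<^sup>L mu f"
proof -
  interpret rd: real_distribution nuL by (rule rnu(2))
  obtain B where B: "B \<ge> 0" "\<forall>x\<in>X. \<bar>f x\<bar> \<le> B" using bounded_on_X[OF fc] by blast
  have pX: "pi ` Cs \<subseteq> X" using pi_in by blast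
  have cfp: "continuous_on Cs (\<lambda>t. f (pi t))" by (rule continuous_on_compose2[OF fc pi_cont pX])
  have bfp: "\<bar>f (pi t)\<bar> \<le> B" if "t \<in> Cs" for t using B(2) pi_in[OF that] by blast
  obtain H where H: "\<forall>x. isCont H x" "\<forall>x. \<bar>H x\<bar> \<le> B" "\<forall>t\<in>Cs. H t = f (pi t)"
    using tietze_real[OF Cs_closed cfp bfp B(1)] by blast
  have fm: "f \<in> borel_measurable (restrict_space borel X)" by (rule borel_measurable_continuous_on_restrict[OF fc])
  have "integral\<^sup>L mu f = integral\<^sup>L nuL (\<lambda>t. f (pi' t))" by (rule mu_int[OF fm])
  also have "\<dots> = integral\<^sup>L nuL H"
  proof (rule integral_cong_AE)
    show "(\<lambda>t. f (pi' t)) \<in> borel_measurable nuL" by (rule measurable_compose[OF pi'_meas fm])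
    have "H \<in> borel_measurable borel"
      using H(1) by (intro borel_measurable_continuous_onI continuous_at_imp_continuous_on) auto
    thus "H \<in> borel_measurable nuL" using measurable_cong_sets[OF rd.events_eq_borel refl] by simp
    have "AE t in nuL. t \<in> Cs" by (rule rd.AE_prob_1[OF nuL_Cs])
    thus "AE t in nuL. f (pi' t) = H t"
      by eventually_elim (simp add: pi'_def H(3))
  qed
  finally have eq: "integral\<^sup>L mu f = integral\<^sup>L nuL H" .
  have "avg (rr n) f = avg (rr n) (\<lambda>x. H (s x))" for n
    by (rule avg_cong) (simp add: H(3) s_in_Cs orbX pi_s)
  moreover have "(\<lambda>n. avg (rr n) (\<lambda>x. H (s x))) \<longlonglongrightarrow> integral\<^sup>L nuL H"
    by (rule conv_h[of H B]) (use H in auto)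
  ultimately show ?thesis using eq by simp
qed

lemma avg_shift:
  assumes B: "\<forall>x\<in>X. \<bar>f x\<bar> \<le> B"
  shows "\<bar>avg n (\<lambda>x. f (T h x)) - avg n f\<bar> \<le> B * (real (card (symdiff (left_transl h (F n)) (F n))) / real (card (F n)))"
proof -
  define \<phi> where "\<phi> g = f (T g x0)" for g
  define L where "L = left_transl h (F n)"
  have finL: "finite L" unfolding L_def left_transl_def using Ffin by simp
  have inj: "inj_on (\<lambda>g. h + g) (F n)" by (rule inj_onI) simp
  have s1: "(\<Sum>g\<in>F n. f (T h (T g x0))) = sum \<phi> L"
  proof -
    have "(\<Sum>g\<in>F n. f (T h (T g x0))) = (\<Sum>g\<in>F n. \<phi> (h + g))"
      using Gs(5)[OF Gsys x0X] by (simp add: \<phi>_def)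
    also have "\<dots> = sum \<phi> L" unfolding L_def left_transl_def by (simp add: sum.reindex[OF inj] o_def)
    finally show ?thesis .
  qed
  have b\<phi>: "\<bar>\<phi> g\<bar> \<le> B" for g using B orbX unfolding \<phi>_def by blast
  have bnd: "\<bar>sum \<phi> S\<bar> \<le> B * real (card S)" for S
  proof -
    have "\<bar>sum \<phi> S\<bar> \<le> (\<Sum>g\<in>S. \<bar>\<phi> g\<bar>)" by (rule sum_abs)
    also have "\<dots> \<le> of_nat (card S) * B" by (rule sum_bounded_above) (rule b\<phi>)
    finally show ?thesis by (simp add: mult.commute)
  qed
  have e1: "sum \<phi> L = sum \<phi> (L \<inter> F n) + sum \<phi> (L - F n)" by (rule sum.Int_Diff[OF finL])
  have e2: "sum \<phi> (F n) = sum \<phi> (F n \<inter> L) + sum \<phi> (F n - L)" by (rule sum.Int_Diff[OF Ffin])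
  have "L \<inter> F n = F n \<inter> L" by blast
  hence d: "sum \<phi> L - sum \<phi> (F n) = sum \<phi> (L - F n) - sum \<phi> (F n - L)" using e1 e2 by simp
  have cs: "card (symdiff L (F n)) = card (L - F n) + card (F n - L)"
    unfolding symdiff_def by (rule card_Un_disjoint) (use finL Ffin in auto)
  have "\<bar>sum \<phi> L - sum \<phi> (F n)\<bar> \<le> \<bar>sum \<phi> (L - F n)\<bar> + \<bar>sum \<phi> (F n - L)\<bar>" unfolding d by (rule abs_triangle_ineq4)
  also have "\<dots> \<le> B * real (card (L - F n)) + B * real (card (F n - L))" by (intro add_mono bnd)
  also have "\<dots> = B * real (card (symdiff L (F n)))" unfolding cs by (simp add: algebra_simps)
  finally have main: "\<bar>sum \<phi> L - sum \<phi> (F n)\<bar> \<le> B * real (card (symdiff L (F n)))" .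
  have cpos: "real (card (F n)) > 0" using Ffin Fne by (simp add: card_gt_0_iff)
  have "avg n (\<lambda>x. f (T h x)) - avg n f = (sum \<phi> L - sum \<phi> (F n)) / real (card (F n))"
    unfolding avg_def s1[symmetric] \<phi>_def by (simp add: diff_divide_distrib)
  hence "\<bar>avg n (\<lambda>x. f (T h x)) - avg n f\<bar> = \<bar>sum \<phi> L - sum \<phi> (F n)\<bar> / real (card (F n))" by simp
  also have "\<dots> \<le> B * real (card (symdiff L (F n))) / real (card (F n))"
    by (rule divide_right_mono[OF main]) (use cpos in simp)
  finally show ?thesis unfolding L_def by simp
qed

lemma int_inv:
  fixes f :: "'a \<Rightarrow> real"
  assumes fc: "continuous_on X f"
  shows "integral\<^sup>L mu (\<lambda>x. f (T h x)) = integral\<^sup>L mu f"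
proof -
  obtain B where B: "B \<ge> 0" "\<forall>x\<in>X. \<bar>f x\<bar> \<le> B" using bounded_on_X[OF fc] by blast
  have TX: "T h ` X \<subseteq> X" using Gs(6)[OF Gsys] by blast
  have fc': "continuous_on X (\<lambda>x. f (T h x))" by (rule continuous_on_compose2[OF fc Gs(3)[OF Gsys] TX])
  note l1 = lim_avg[OF fc'] and l2 = lim_avg[OF fc]
  have rat: "(\<lambda>n. real (card (symdiff (left_transl h (F (rr n))) (F (rr n)))) / real (card (F (rr n)))) \<longlonglongrightarrow> 0"
    using LIMSEQ_subseq_LIMSEQ[OF Fol rnu(1)] by (simp add: o_def)
  have "(\<lambda>n. avg (rr n) (\<lambda>x. f (T h x)) - avg (rr n) f) \<longlonglongrightarrow> 0"
  proof (rule Lim_null_comparison)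
    show "eventually (\<lambda>n. norm (avg (rr n) (\<lambda>x. f (T h x)) - avg (rr n) f) \<le>
        B * (real (card (symdiff (left_transl h (F (rr n))) (F (rr n)))) / real (card (F (rr n))))) sequentially"
      using avg_shift[OF B(2)] by simp
    show "(\<lambda>n. B * (real (card (symdiff (left_transl h (F (rr n))) (F (rr n)))) / real (card (F (rr n))))) \<longlonglongrightarrow> 0"
      using tendsto_mult[OF tendsto_const rat, of B] by simp
  qed
  moreover have "(\<lambda>n. avg (rr n) (\<lambda>x. f (T h x)) - avg (rr n) f) \<longlonglongrightarrow> integral\<^sup>L mu (\<lambda>x. f (T h x)) - integral\<^sup>L mu f"
    by (rule tendsto_diff[OF l1 l2])
  ultimately have "integral\<^sup>L mu (\<lambda>x. f (T h x)) - integral\<^sup>L mu f = 0" using LIMSEQ_unique by blast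
  thus ?thesis by simp
qed

lemma Th_meas: "T h \<in> restrict_space borel X \<rightarrow>\<^sub>M restrict_space borel X"
proof (rule measurable_restrict_space2)
  show "T h \<in> space (restrict_space borel X) \<rightarrow> X" using Gs(2)[OF Gsys] by (auto simp: space_restrict_space)
  show "T h \<in> borel_measurable (restrict_space borel X)"
    by (rule borel_measurable_continuous_on_restrict[OF Gs(3)[OF Gsys]])
qed

lemma Th_meas_mu: "T h \<in> mu \<rightarrow>\<^sub>M restrict_space borel X"
  by (subst measurable_cong_sets[OF mu_sets refl]) (rule Th_meas)

lemma mu_fin: "finite_measure mu"
proof -
  interpret prob_space mu by (rule mu_prob)
  show ?thesis by (rule finite_measureI) (simp add: emeasure_space_1)
qed

lemma sets_rX: "sets (restrict_space borel X) = sigma_sets X ((\<inter>) X ` Collect closed)"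
proof -
  have sb: "sets (borel :: 'a measure) = sigma_sets UNIV (Collect closed)"
    by (subst borel_eq_closed) (simp add: sets_measure_of)
  have XS: "X \<in> sigma_sets UNIV (Collect closed)" using compact_imp_closed[OF cX] by (auto intro: sigma_sets.Basic)
  have "sets (restrict_space borel X) = (\<inter>) X ` sets borel" by (rule sets_restrict_space)
  also have "\<dots> = (\<inter>) X ` sigma_sets UNIV (Collect closed)" using sb by simp
  also have "\<dots> = sigma_sets X ((\<inter>) X ` Collect closed)" by (rule sigma_sets_Int[OF XS]) simp
  finally show ?thesis .
qed

lemma mu_closed_eq:
  assumes C: "closed C"
  shows "emeasure (distr mu (restrict_space borel X) (T h)) (X \<inter> C) = emeasure mu (X \<inter> C)"
proof (cases "C = {}")
  case True
  then show ?thesis by simp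
next
  case False
  define M1 where "M1 = distr mu (restrict_space borel X) (T h)"
  have pM1: "prob_space M1" unfolding M1_def by (rule prob_space.prob_space_distr[OF mu_prob Th_meas_mu])
  have fM1: "finite_measure M1"
  proof -
    interpret prob_space M1 by (rule pM1)
    show ?thesis by (rule finite_measureI) (simp add: emeasure_space_1)
  qed
  have sM1: "sets M1 = sets (restrict_space borel X)" unfolding M1_def by simp
  have spM1: "space M1 = X" unfolding M1_def by (simp add: space_restrict_space)
  have CX: "C \<inter> X \<in> sets (restrict_space borel X)" using C by (auto simp: sets_restrict_space)
  have idm: "(\<lambda>x. infdist x C) \<in> borel_measurable (restrict_space borel X)"
    by (rule borel_measurable_continuous_on_restrict) (intro continuous_intros)
  have lim1: "(\<lambda>k. integral\<^sup>L M1 (phik C k)) \<longlonglongrightarrow> measure M1 (C \<inter> space M1)"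
    by (rule closed_approx[OF fM1 C False]) (use CX idm sM1 spM1 measurable_cong_sets[OF sM1 refl] in auto)
  have lim2: "(\<lambda>k. integral\<^sup>L mu (phik C k)) \<longlonglongrightarrow> measure mu (C \<inter> space mu)"
    by (rule closed_approx[OF mu_fin C False]) (use CX idm mu_sets mu_space measurable_cong_sets[OF mu_sets refl] in auto)
  have "integral\<^sup>L M1 (phik C k) = integral\<^sup>L mu (phik C k)" for k
  proof -
    have pm: "phik C k \<in> borel_measurable (restrict_space borel X)"
      by (rule borel_measurable_continuous_on_restrict[OF phik_cont])
    have "integral\<^sup>L M1 (phik C k) = integral\<^sup>L mu (\<lambda>x. phik C k (T h x))"
      unfolding M1_def by (rule integral_distr[OF Th_meas_mu pm])
    also have "\<dots> = integral\<^sup>L mu (phik C k)" by (rule int_inv[OF phik_cont])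
    finally show ?thesis .
  qed
  hence "measure M1 (C \<inter> space M1) = measure mu (C \<inter> space mu)" using lim1 lim2 LIMSEQ_unique by simp
  hence "measure M1 (X \<inter> C) = measure mu (X \<inter> C)" using spM1 mu_space by (simp add: Int_commute)
  thus ?thesis using finite_measure.emeasure_eq_measure[OF fM1] finite_measure.emeasure_eq_measure[OF mu_fin]
    unfolding M1_def by simp
qed

lemma mu_inv: "distr mu (restrict_space borel X) (T h) = mu"
proof (rule measure_eqI_generator_eq[where \<Omega>=X and E="(\<inter>) X ` Collect closed" and A="\<lambda>_. X"])
  show "Int_stable ((\<inter>) X ` Collect closed)"
  proof (rule Int_stableI)
    fix a b assume "a \<in> (\<inter>) X ` Collect closed" "b \<in> (\<inter>) X ` Collect closed"
    then obtain c d where "closed c" "closed d" "a = X \<inter> c" "b = X \<inter> d" by blast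
    hence "a \<inter> b = X \<inter> (c \<inter> d)" "closed (c \<inter> d)" by auto
    thus "a \<inter> b \<in> (\<inter>) X ` Collect closed" by blast
  qed
  show "(\<inter>) X ` Collect closed \<subseteq> Pow X" by blast
  show "\<And>Y. Y \<in> (\<inter>) X ` Collect closed \<Longrightarrow> emeasure (distr mu (restrict_space borel X) (T h)) Y = emeasure mu Y"
    using mu_closed_eq by blast
  show "sets (distr mu (restrict_space borel X) (T h)) = sigma_sets X ((\<inter>) X ` Collect closed)"
    using sets_rX by simp
  show "sets mu = sigma_sets X ((\<inter>) X ` Collect closed)" using sets_rX mu_sets by simp
  show "range (\<lambda>_. X) \<subseteq> (\<inter>) X ` Collect closed" using compact_imp_closed[OF cX] by blast
  show "(\<Union>i. X) = X" by simp
  show "emeasure (distr mu (restrict_space borel X) (T h)) X \<noteq> \<infinity>"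
  proof -
    interpret prob_space "distr mu (restrict_space borel X) (T h)"
      by (rule prob_space.prob_space_distr[OF mu_prob Th_meas_mu])
    show ?thesis by simp
  qed
qed

lemma mu_A: "emeasure mu A = 1"
proof -
  have Ane: "A \<noteq> {}" using x0A by blast
  have AXm: "A \<inter> space mu \<in> sets mu" using Acl AX mu_sets mu_space by (auto simp: sets_restrict_space)
  have idm: "(\<lambda>x. infdist x A) \<in> borel_measurable mu"
    by (subst measurable_cong_sets[OF mu_sets refl], rule borel_measurable_continuous_on_restrict) (intro continuous_intros)
  have lim: "(\<lambda>k. integral\<^sup>L mu (phik A k)) \<longlonglongrightarrow> measure mu (A \<inter> space mu)"
    by (rule closed_approx[OF mu_fin Acl Ane AXm idm])
  have one: "integral\<^sup>L mu (phik A k) = 1" for k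
  proof -
    have "(\<lambda>n. avg (rr n) (phik A k)) \<longlonglongrightarrow> integral\<^sup>L mu (phik A k)" by (rule lim_avg[OF phik_cont])
    moreover have "avg (rr n) (phik A k) = 1" for n
    proof -
      have "avg (rr n) (phik A k) = avg (rr n) (\<lambda>_. 1)"
        by (rule avg_cong) (simp add: phik_in Ainv[OF x0A])
      thus ?thesis by (simp add: avg_const)
    qed
    ultimately have "(\<lambda>n. 1) \<longlonglongrightarrow> integral\<^sup>L mu (phik A k)" by simp
    thus ?thesis using LIMSEQ_unique tendsto_const by metis
  qed
  have "(\<lambda>k. 1) \<longlonglongrightarrow> measure mu (A \<inter> space mu)" using lim one by simp
  hence "measure mu (A \<inter> space mu) = 1" using LIMSEQ_unique tendsto_const by metis
  hence "measure mu A = 1" using AX mu_space by (simp add: Int_absorb2)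
  thus ?thesis using finite_measure.emeasure_eq_measure[OF mu_fin] by simp
qed

lemma kb_main: "mu \<in> invariant_measures X T \<and> emeasure mu A = 1"
proof
  show "emeasure mu A = 1" by (rule mu_A)
  show "mu \<in> invariant_measures X T"
    unfolding invariant_measures_def
  proof (intro CollectI conjI allI ballI)
    show "prob_space mu" by (rule mu_prob)
    show "sets mu = sets (restrict_space borel X)" by (rule mu_sets)
    fix g
    show "T g \<in> mu \<rightarrow>\<^sub>M mu" by (subst measurable_cong_sets[OF mu_sets mu_sets]) (rule Th_meas)
    fix B assume B: "B \<in> sets mu"
    have "emeasure mu (T g -` B \<inter> space mu) = emeasure (distr mu (restrict_space borel X) (T g)) B"
      by (rule emeasure_distr[OF Th_meas_mu, symmetric]) (use B mu_sets in simp)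
    also have "\<dots> = emeasure mu B" using mu_inv by simp
    finally show "emeasure mu (T g -` B \<inter> space mu) = emeasure mu B" .
  qed
qed

end

theorem theorem1p4:
  fixes X :: "'a::metric_space set" and T :: "'g::group_add \<Rightarrow> 'a \<Rightarrow> 'a"
    and F :: "nat \<Rightarrow> 'g set"
  assumes "countable (UNIV :: 'g set)" and "infinite (UNIV :: 'g set)"
    and "amenable_group TYPE('g)"
    and "G_system X T" and "X \<noteq> {}"
    and "two_sided_folner_seq F" and "tempered F"
  shows "(\<exists>x0\<in>X. local_umdim_M X T F x0 = umdim_M T X F) \<and>
         (\<forall>x\<in>X. local_umdim_M X T F x \<le> umdim_M T X F) \<and>
         (\<exists>\<mu>0\<in>invariant_measures X T.
            (\<integral>\<^sup>+ x. e2ennreal (local_umdim_M X T F x) \<partial>\<mu>0) = e2ennreal (umdim_M T X F)) \<and>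
         (\<forall>\<mu>\<in>invariant_measures X T.
            (\<integral>\<^sup>+ x. e2ennreal (local_umdim_M X T F x) \<partial>\<mu>) \<le> e2ennreal (umdim_M T X F))"
proof -
  note G = Gs[OF assms(4)]
  have Ffin: "\<And>n. finite (F n)" and Fne: "\<And>n. F n \<noteq> {}"
    and Fol: "\<And>g. (\<lambda>n. real (card (symdiff (left_transl g (F n)) (F n))) / real (card (F n))) \<longlonglongrightarrow> 0"
    using assms(6) unfolding two_sided_folner_seq_def folner_seq_def by auto
  define M where "M = umdim_M T X F"
  have P1: "\<exists>x0\<in>X. local_umdim_M X T F x0 = M"
    unfolding M_def by (rule exists_full_point[OF G(1) assms(5) Ffin Fne G(6)])
  have P2: "\<forall>x\<in>X. local_umdim_M X T F x \<le> M"
    unfolding M_def using local_le[OF G(1)] by blast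
  obtain x0 where x0: "x0 \<in> X" "local_umdim_M X T F x0 = M" using P1 by blast
  define A where "A = {x \<in> X. M \<le> local_umdim_M X T F x}"
  have Acl: "closed A" unfolding A_def by (rule full_set_closed[OF G(1)])
  have AX: "A \<subseteq> X" unfolding A_def by blast
  have x0A: "x0 \<in> A" unfolding A_def using x0 by simp
  have Ainv: "T g x \<in> A" if "x \<in> A" for g x
  proof -
    have xX: "x \<in> X" using that AX by blast
    have "local_umdim_M X T F (T g x) = local_umdim_M X T F x"
      by (rule local_invariant[OF assms(4) xX assms(6)])
    thus ?thesis using that G(2)[OF xX] unfolding A_def by simp
  qed
  have kbI: "kb X T F A x0"
    unfolding kb_def kb_axioms_def cmet_def
    using G(1) assms(5) assms(4) Ffin Fne Fol Acl AX x0A Ainv by blast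
  have km: "kb.mu X T F x0 \<in> invariant_measures X T \<and> emeasure (kb.mu X T F x0) A = 1"
    by (rule kb.kb_main[OF kbI])
  define \<mu>0 where "\<mu>0 = kb.mu X T F x0"
  have inv0: "\<mu>0 \<in> invariant_measures X T" and eA: "emeasure \<mu>0 A = 1" using km \<mu>0_def by auto
  have sp: "space \<mu> = X" if "\<mu> \<in> invariant_measures X T" for \<mu>
  proof -
    have "sets \<mu> = sets (restrict_space borel X)" using that unfolding invariant_measures_def by blast
    hence "space \<mu> = space (restrict_space borel X)" by (rule sets_eq_imp_space_eq)
    thus ?thesis by (simp add: space_restrict_space)
  qed
  have ps: "prob_space \<mu>" if "\<mu> \<in> invariant_measures X T" for \<mu>
    using that unfolding invariant_measures_def by blast
  have P3: "(\<integral>\<^sup>+ x. e2ennreal (local_umdim_M X T F x) \<partial>\<mu>0) = e2ennreal M"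
  proof -
    interpret prob_space \<mu>0 by (rule ps[OF inv0])
    have "measure \<mu>0 A = 1" using eA by (simp add: measure_def)
    hence "AE x in \<mu>0. x \<in> A" by (rule AE_prob_1)
    hence "AE x in \<mu>0. e2ennreal (local_umdim_M X T F x) = e2ennreal M"
    proof eventually_elim
      case (elim x)
      hence "x \<in> X" "M \<le> local_umdim_M X T F x" unfolding A_def by auto
      hence "local_umdim_M X T F x = M" using P2 by (simp add: order_antisym)
      thus ?case by simp
    qed
    hence "(\<integral>\<^sup>+ x. e2ennreal (local_umdim_M X T F x) \<partial>\<mu>0) = (\<integral>\<^sup>+ x. e2ennreal M \<partial>\<mu>0)"
      by (rule nn_integral_cong_AE)
    also have "\<dots> = e2ennreal M" by (simp add: emeasure_space_1)
    finally show ?thesis .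
  qed
  have P4: "(\<integral>\<^sup>+ x. e2ennreal (local_umdim_M X T F x) \<partial>\<mu>) \<le> e2ennreal M"
    if "\<mu> \<in> invariant_measures X T" for \<mu>
  proof -
    interpret prob_space \<mu> by (rule ps[OF that])
    have "(\<integral>\<^sup>+ x. e2ennreal (local_umdim_M X T F x) \<partial>\<mu>) \<le> (\<integral>\<^sup>+ x. e2ennreal M \<partial>\<mu>)"
    proof (rule nn_integral_mono)
      fix x assume "x \<in> space \<mu>"
      hence "x \<in> X" using sp[OF that] by simp
      hence "local_umdim_M X T F x \<le> M" using P2 by blast
      thus "e2ennreal (local_umdim_M X T F x) \<le> e2ennreal M" by (rule e2ennreal_mono)
    qed
    also have "\<dots> = e2ennreal M" by (simp add: emeasure_space_1)
    finally show ?thesis .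
  qed
  show ?thesis
    unfolding M_def[symmetric]
    using P1 P2 P3 P4 inv0 by blast
qed

end
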